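(* Let $t\ge1$ and $n=2t^2+2t+1$. Let $\mathcal{C}_0\subseteq\mathbb{Z}_n^2$ be a linear $t$-error-correcting perfect code with generator matrix $G=[a~~b]$, and let $\mathcal{C}=\mathbf{x}+\mathcal{C}_0$ for some $\mathbf{x}=(x_1,x_2)\in\mathbb{Z}_n^2$. Let $\mathcal{S}$ be the set of perfect Sudoku grids with respect to $\mathcal{C}$, $\bar{\mathcal{S}}$ the set of equivalence classes of $\mathcal{S}$ under relabeling, and \[ \mathcal{G}_\mathcal{S}=\langle \tau_2^{x_1+x_2+1}\tau_1^{x_1-x_2}r,\ \tau_1^a\tau_2^b\rangle. \] Then every orbit (equivalence class) of the induced action of $\mathcal{G}_\mathcal{S}$ on $\bar{\mathcal{S}}$ has size dividing $4n$.
   Context: $\mathbb{Z}_n$ is the integers modulo $n$; Lee weight of $\mathbf{u}\in\mathbb{Z}_n^2$ is $\sum_i\min\{u_i,n-u_i\}$, Lee distance $d_L(\mathbf{u},\mathbf{v})=\mathrm{wt}_L(\mathbf{u}-\mathbf{v})$. A linear code is a submodule of $\mathbb{Z}_n^2$, with generator matrix whose rows form a minimal spanning set. A code with minimum Lee distance $d$ is perfect if, with $t=\lfloor(d-1)/2\rfloor$, the Lee balls $\mathcal{B}_t(\mathbf{c})$ around codewords cover $\mathbb{Z}_n^2$; $t$-error-correcting means $d\ge2t+1$. For $n=2t^2+2t+1$ such a code has $n$ codewords $\mathbf{c}_1,\dots,\mathbf{c}_n$, and the palette grid $\mathcal{I}_\mathcal{C}$ is the $n\times n$ array (rows/columns indexed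 by $\mathbb{Z}_n$) with entry $i$ at each position $(x,y)\in\mathcal{B}_t(\mathbf{c}_i)$. Two $n\times n$ arrays over $n$-sets are orthogonal if all $n^2$ ordered pairs of corresponding entries are distinct. A perfect Sudoku grid with respect to $\mathcal{C}$ is a Latin square of order $n$ on $[n]=\{1,\dots,n\}$ orthogonal to $\mathcal{I}_\mathcal{C}$. Relabeling: $S_1\sim S_2$ iff there is a bijection $\sigma:[n]\to[n]$ with $\sigma((S_1)_{i,j})=(S_2)_{i,j}$ for all $i,j$. Maps on arrays (indices mod $n$): $(r(A))_{i,j}=A_{n-1-j,i}$, $(\tau_1(A))_{i,j}=A_{i-1,j}$, $(\tau_2(A))_{i,j}=A_{i,j-1}$; the generated group acts by $\varphi\cdot A=\varphi(A)$. Elements of $\mathcal{G}_\mathcal{S}$ map $\mathcal{S}$ into $\mathcal{S}$ and commute with relabeling, so $\mathcal{G}_\mathcal{S}$ acts on $\bar{\mathcal{S}}$. *)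

theory Defs
  imports Main "HOL-Library.Product_Lexorder"
begin

(* Elements of Z_n^2 are represented by pairs of naturals (x,y) with x,y < n.
   An n x n array (rows/columns indexed by Z_n) is a function nat \<times> nat \<Rightarrow> nat;
   only its values on zn2 n matter, and grids are normalised to be 0 outside. *)

definition zn2 :: "nat \<Rightarrow> (nat \<times> nat) set" where
  "zn2 n = {0..<n} \<times> {0..<n}"

definition lee_wt :: "nat \<Rightarrow> nat \<times> nat \<Rightarrow> nat" where
  "lee_wt n u = min (fst u) (n - fst u) + min (snd u) (n - snd u)"

definition lee_dist :: "nat \<Rightarrow> nat \<times> nat \<Rightarrow> nat \<times> nat \<Rightarrow> nat" where
  "lee_dist n u v = lee_wt n ((fst u + n - fst v) mod n, (snd u + n - snd v) mod n)"

definition lee_ball :: "nat \<Rightarrow> nat \<Rightarrow> nat \<times> nat \<Rightarrow> (nat \<times> nat) set" where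
  "lee_ball n t c = {p \<in> zn2 n. lee_dist n p c \<le> t}"

definition lin_code :: "nat \<Rightarrow> nat \<Rightarrow> nat \<Rightarrow> (nat \<times> nat) set" where
  "lin_code n a b = {((k * a) mod n, (k * b) mod n) | k. True}"

definition translate_code :: "nat \<Rightarrow> nat \<times> nat \<Rightarrow> (nat \<times> nat) set \<Rightarrow> (nat \<times> nat) set" where
  "translate_code n x C = {((fst x + fst c) mod n, (snd x + snd c) mod n) | c. c \<in> C}"

definition min_lee_dist :: "nat \<Rightarrow> (nat \<times> nat) set \<Rightarrow> nat" where
  "min_lee_dist n C = Min {lee_dist n u v | u v. u \<in> C \<and> v \<in> C \<and> u \<noteq> v}"

definition is_perfect :: "nat \<Rightarrow> (nat \<times> nat) set \<Rightarrow> bool" where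
  "is_perfect n C \<longleftrightarrow>
     (\<Union>c\<in>C. lee_ball n ((min_lee_dist n C - 1) div 2) c) = zn2 n"

definition t_error_correcting :: "nat \<Rightarrow> nat \<Rightarrow> (nat \<times> nat) set \<Rightarrow> bool" where
  "t_error_correcting n t C \<longleftrightarrow> min_lee_dist n C \<ge> 2 * t + 1"

text \<open>Palette grid: codewords c_1,...,c_n enumerated in increasing (lexicographic) order;
  entry i on the ball of radius t around c_i.\<close>
definition palette :: "nat \<Rightarrow> nat \<Rightarrow> (nat \<times> nat) set \<Rightarrow> nat \<times> nat \<Rightarrow> nat" where
  "palette n t C p = (if p \<in> zn2 n then
      (THE i. i \<in> {1..n} \<and> p \<in> lee_ball n t (sorted_list_of_set C ! (i - 1)))
    else 0)"

definition latin_square :: "nat \<Rightarrow> (nat \<times> nat \<Rightarrow> nat) \<Rightarrow> bool" where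
  "latin_square n A \<longleftrightarrow>
     (\<forall>p\<in>zn2 n. A p \<in> {1..n}) \<and>
     (\<forall>i<n. inj_on (\<lambda>j. A (i, j)) {0..<n}) \<and>
     (\<forall>j<n. inj_on (\<lambda>i. A (i, j)) {0..<n})"

definition orthogonal :: "nat \<Rightarrow> (nat \<times> nat \<Rightarrow> nat) \<Rightarrow> (nat \<times> nat \<Rightarrow> nat) \<Rightarrow> bool" where
  "orthogonal n A B \<longleftrightarrow> inj_on (\<lambda>p. (A p, B p)) (zn2 n)"

definition perfect_sudoku_grids :: "nat \<Rightarrow> nat \<Rightarrow> (nat \<times> nat) set \<Rightarrow> (nat \<times> nat \<Rightarrow> nat) set" where
  "perfect_sudoku_grids n t C =
     {S. latin_square n S \<and> orthogonal n S (palette n t C) \<and> (\<forall>p. p \<notin> zn2 n \<longrightarrow> S p = 0)}"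

definition relabel_rel :: "nat \<Rightarrow> (nat \<times> nat \<Rightarrow> nat) set \<Rightarrow> ((nat \<times> nat \<Rightarrow> nat) \<times> (nat \<times> nat \<Rightarrow> nat)) set" where
  "relabel_rel n X = {(S1, S2). S1 \<in> X \<and> S2 \<in> X \<and>
     (\<exists>\<sigma>. bij_betw \<sigma> {1..n} {1..n} \<and> (\<forall>p\<in>zn2 n. \<sigma> (S1 p) = S2 p))}"

definition rot :: "nat \<Rightarrow> (nat \<times> nat \<Rightarrow> nat) \<Rightarrow> (nat \<times> nat \<Rightarrow> nat)" where
  "rot n A = (\<lambda>(i, j). if i < n \<and> j < n then A (n - 1 - j, i) else 0)"

definition tau1 :: "nat \<Rightarrow> (nat \<times> nat \<Rightarrow> nat) \<Rightarrow> (nat \<times> nat \<Rightarrow> nat)" where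
  "tau1 n A = (\<lambda>(i, j). if i < n \<and> j < n then A ((i + n - 1) mod n, j) else 0)"

definition tau2 :: "nat \<Rightarrow> (nat \<times> nat \<Rightarrow> nat) \<Rightarrow> (nat \<times> nat \<Rightarrow> nat)" where
  "tau2 n A = (\<lambda>(i, j). if i < n \<and> j < n then A (i, (j + n - 1) mod n) else 0)"

text \<open>Generated by two maps (all finite compositions); since the generators have finite
  order on arrays, this coincides with the generated group.\<close>
inductive_set generated :: "('a \<Rightarrow> 'a) \<Rightarrow> ('a \<Rightarrow> 'a) \<Rightarrow> ('a \<Rightarrow> 'a) set"
  for f g where
  gen_id: "id \<in> generated f g"
| gen_f: "\<phi> \<in> generated f g \<Longrightarrow> f \<circ> \<phi> \<in> generated f g"
| gen_g: "\<phi> \<in> generated f g \<Longrightarrow> g \<circ> \<phi> \<in> generated f g"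

definition G_S :: "nat \<Rightarrow> nat \<Rightarrow> nat \<Rightarrow> nat \<Rightarrow> nat \<Rightarrow> ((nat \<times> nat \<Rightarrow> nat) \<Rightarrow> (nat \<times> nat \<Rightarrow> nat)) set" where
  "G_S n a b x1 x2 = generated
     (tau2 n ^^ nat ((int x1 + int x2 + 1) mod int n) \<circ> tau1 n ^^ nat ((int x1 - int x2) mod int n) \<circ> rot n)
     (tau1 n ^^ a \<circ> tau2 n ^^ b)"

definition class_orbit :: "('a \<Rightarrow> 'a) set \<Rightarrow> 'a set set \<Rightarrow> 'a set \<Rightarrow> 'a set set" where
  "class_orbit G Q X = {Y \<in> Q. \<exists>\<phi>\<in>G. \<exists>S\<in>X. \<phi> S \<in> Y}"

end

theory Submission
  imports Defs
begin


lemma seq_shift: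
  assumes H: "\<And>i k. s i = s k \<Longrightarrow> s (Suc i) = s (Suc k)"
  shows "s i = s k \<Longrightarrow> s (i + l) = s (k + l)"
  by (induction l) (auto intro: H)

lemma seq_period_card:
  fixes s :: "nat \<Rightarrow> 'b"
  assumes H: "\<And>i k. s i = s k \<Longrightarrow> s (Suc i) = s (Suc k)"
    and P: "s N = s 0" and N: "N > 0"
  shows "finite (range s) \<and> card (range s) dvd N"
proof -
  define p where "p = (LEAST k. 0 < k \<and> s k = s 0)"
  have pex: "0 < p \<and> s p = s 0" unfolding p_def by (rule LeastI[of _ N]) (use P N in auto)
  have pmin: "\<And>k. 0 < k \<Longrightarrow> k < p \<Longrightarrow> s k \<noteq> s 0"
    unfolding p_def using not_less_Least by blast
  have per: "s (i + p) = s i" for i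
  proof (induction i)
    case 0 then show ?case using pex by simp
  next
    case (Suc i)
    then have "s (Suc (i+p)) = s (Suc i)" using H by blast
    then show ?case by simp
  qed
  have perq: "s (i + q * p) = s i" for i q
    by (induction q) (auto simp: add.assoc[symmetric] per add.commute[of p] )
  have modp: "s i = s (i mod p)" for i
    using perq[of "i mod p" "i div p"] by (simp add: mult.commute)
  have rng: "range s = s ` {0..<p}"
  proof
    show "range s \<subseteq> s ` {0..<p}"
    proof
      fix y assume "y \<in> range s"
      then obtain i where "y = s i" by auto
      then show "y \<in> s ` {0..<p}" using modp[of i] pex by auto
    qed
  qed auto
  have inj: "inj_on s {0..<p}"
  proof (rule inj_onI)
    fix i j assume i: "i \<in> {0..<p}" and j: "j \<in> {0..<p}" and e: "s i = s j"
    show "i = j"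
    proof (rule ccontr)
      assume "i \<noteq> j"
      then consider "i < j" | "j < i" by linarith
      then show False
      proof cases
        case 1
        have "s (i + (p - j)) = s (j + (p - j))" using seq_shift[OF H e] .
        also have "j + (p - j) = p" using j by auto
        finally have "s (i + (p - j)) = s 0" using pex by simp
        moreover have "0 < i + (p - j)" "i + (p - j) < p" using 1 j by auto
        ultimately show False using pmin[of "i + (p - j)"] by simp
      next
        case 2
        have "s (j + (p - i)) = s (i + (p - i))" using seq_shift[OF H e[symmetric]] .
        also have "i + (p - i) = p" using i by auto
        finally have "s (j + (p - i)) = s 0" using pex by simp
        moreover have "0 < j + (p - i)" "j + (p - i) < p" using 2 i by auto
        ultimately show False using pmin[of "j + (p - i)"] by simp
      qed
    qed
  qed
  have card: "card (range s) = p" using rng inj card_image by fastforce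
  have "N mod p = 0"
  proof (rule ccontr)
    assume "N mod p \<noteq> 0"
    moreover have "N mod p < p" using pex by auto
    moreover have "s (N mod p) = s 0" using modp[of N] P by simp
    ultimately show False using pmin[of "N mod p"] by simp
  qed
  then show ?thesis using card rng by auto
qed

lemma orbit_abstract:
  assumes eq: "equiv P R"
    and fP: "\<And>y. y \<in> P \<Longrightarrow> f y \<in> P" and gP: "\<And>y. y \<in> P \<Longrightarrow> g y \<in> P"
    and fR: "\<And>y z. (y, z) \<in> R \<Longrightarrow> (f y, f z) \<in> R"
    and gR: "\<And>y z. (y, z) \<in> R \<Longrightarrow> (g y, g z) \<in> R"
    and f4: "\<And>y. y \<in> P \<Longrightarrow> (f ^^ 4) y = y"
    and gn: "\<And>y. y \<in> P \<Longrightarrow> (g ^^ n) y = y"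
    and fg: "\<And>y. y \<in> P \<Longrightarrow> f (g y) = (g ^^ m) (f y)"
    and n: "n > 0" and x: "x \<in> P"
  shows "card {R``{(g ^^ i) ((f ^^ j) x)} | i j. True} dvd 4 * n"
proof -
  define cls where "cls y = R``{y}" for y
  have fjP: "(f ^^ j) y \<in> P" if "y \<in> P" for j y using that by (induction j) (auto intro: fP)
  have giP: "(g ^^ i) y \<in> P" if "y \<in> P" for i y using that by (induction i) (auto intro: gP)
  have giR: "((g ^^ i) y, (g ^^ i) z) \<in> R" if "(y, z) \<in> R" for i y z
    using that by (induction i) (auto intro: gR)
  have RP: "y \<in> P" "z \<in> P" if "(y, z) \<in> R" for y z
    using that eq unfolding equiv_def refl_on_def by auto
  have cls_eq: "cls y = cls z \<longleftrightarrow> (y, z) \<in> R" if "y \<in> P" "z \<in> P" for y z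
    unfolding cls_def using eq_equiv_class_iff[OF eq that] .
  have fgi: "f ((g ^^ i) y) = (g ^^ (m * i)) (f y)" if "y \<in> P" for i y
  proof (induction i)
    case 0 then show ?case by simp
  next
    case (Suc i)
    have "f ((g ^^ Suc i) y) = f (g ((g ^^ i) y))" by simp
    also have "\<dots> = (g ^^ m) (f ((g ^^ i) y))" using fg giP[OF that] by blast
    also have "\<dots> = (g ^^ m) ((g ^^ (m * i)) (f y))" using Suc by simp
    also have "\<dots> = (g ^^ (m * Suc i)) (f y)" by (simp add: funpow_add)
    finally show ?case .
  qed
  have fjgi: "(f ^^ j) ((g ^^ i) y) = (g ^^ (m ^ j * i)) ((f ^^ j) y)" if "y \<in> P" for i j y
  proof (induction j arbitrary: i)
    case 0 then show ?case by simp
  next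
    case (Suc j)
    have "(f ^^ Suc j) ((g ^^ i) y) = f ((f ^^ j) ((g ^^ i) y))" by simp
    also have "\<dots> = f ((g ^^ (m ^ j * i)) ((f ^^ j) y))" using Suc by simp
    also have "\<dots> = (g ^^ (m * (m ^ j * i))) (f ((f ^^ j) y))" using fgi fjP[OF that] by blast
    also have "\<dots> = (g ^^ (m ^ Suc j * i)) ((f ^^ Suc j) y)" by (simp add: mult.assoc)
    finally show ?case .
  qed
  have gper: "(g ^^ (n * c + i)) y = (g ^^ i) y" if "y \<in> P" for c i y
  proof (induction c)
    case 0 then show ?case by simp
  next
    case (Suc c)
    have "(g ^^ (n * Suc c + i)) y = (g ^^ n) ((g ^^ (n * c + i)) y)"
      by (simp add: funpow_add add.assoc)
    also have "\<dots> = (g ^^ (n * c + i)) y" using gn giP[OF that] by blast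
    finally show ?case using Suc by simp
  qed
  have f4k: "(f ^^ (4 * k)) y = y" if "y \<in> P" for k y
  proof (induction k)
    case 0 then show ?case by simp
  next
    case (Suc k)
    have "(f ^^ (4 * Suc k)) y = (f ^^ 4) ((f ^^ (4 * k)) y)" by (simp add: funpow_add)
    then show ?case using Suc f4 that by simp
  qed
  define N where "N y = range (\<lambda>i. cls ((g ^^ i) y))" for y
  have Ncard: "finite (N y) \<and> card (N y) dvd n" if "y \<in> P" for y
    unfolding N_def
  proof (rule seq_period_card)
    fix i k assume "cls ((g ^^ i) y) = cls ((g ^^ k) y)"
    then have "((g ^^ i) y, (g ^^ k) y) \<in> R" using cls_eq giP that by blast
    then have "(g ((g ^^ i) y), g ((g ^^ k) y)) \<in> R" by (rule gR)
    then show "cls ((g ^^ Suc i) y) = cls ((g ^^ Suc k) y)"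
      using cls_eq giP gP that by simp
  qed (use gn that n in auto)
  have Ncls: "N y = N z" if "(y, z) \<in> R" for y z
  proof -
    have "cls ((g ^^ i) y) = cls ((g ^^ i) z)" for i
      using giR[OF that, of i] cls_eq giP RP[OF that] by blast
    then show ?thesis unfolding N_def by simp
  qed
  have Nshift: "N ((g ^^ i) y) = N y" if "y \<in> P" for i y
  proof
    show "N ((g ^^ i) y) \<subseteq> N y"
    proof
      fix Y assume "Y \<in> N ((g ^^ i) y)"
      then obtain k where k: "Y = cls ((g ^^ k) ((g ^^ i) y))" unfolding N_def by auto
      have "(g ^^ k) ((g ^^ i) y) = (g ^^ (k + i)) y" by (simp add: funpow_add)
      then show "Y \<in> N y" unfolding N_def k by (metis rangeI)
    qed
    show "N y \<subseteq> N ((g ^^ i) y)"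
    proof
      fix Y assume "Y \<in> N y"
      then obtain k where k: "Y = cls ((g ^^ k) y)" unfolding N_def by auto
      have "(g ^^ (n * i - i + k)) ((g ^^ i) y) = (g ^^ (n * i + k)) y"
      proof -
        have "i \<le> n * i" using n by simp
        then have "n * i - i + k + i = n * i + k" by linarith
        then show ?thesis by (metis comp_apply funpow_add)
      qed
      also have "\<dots> = (g ^^ k) y" using gper that by blast
      finally show "Y \<in> N ((g ^^ i) y)" unfolding N_def k by (metis rangeI)
    qed
  qed
  define Fc where "Fc c = cls (f (SOME z. z \<in> c))" for c
  have Fc_cls: "Fc (cls y) = cls (f y)" if "y \<in> P" for y
  proof -
    have "y \<in> cls y" unfolding cls_def using equiv_class_self[OF eq that] .
    then have "(SOME z. z \<in> cls y) \<in> cls y" by (rule someI)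
    then have "(y, SOME z. z \<in> cls y) \<in> R" unfolding cls_def by simp
    then have "(f y, f (SOME z. z \<in> cls y)) \<in> R" by (rule fR)
    then show ?thesis unfolding Fc_def using cls_eq fP RP by metis
  qed
  define T where "T j = N ((f ^^ j) x)" for j
  have T_Suc: "T (Suc j) = Fc ` T j" for j
  proof -
    define y where "y = (f ^^ j) x"
    have y: "y \<in> P" unfolding y_def using fjP x by blast
    have "T (Suc j) = N (f y)" unfolding T_def y_def by simp
    also have "\<dots> = Fc ` N y"
    proof
      show "N (f y) \<subseteq> Fc ` N y"
      proof
        fix Y assume "Y \<in> N (f y)"
        then obtain i where i: "Y = cls ((g ^^ i) (f y))" unfolding N_def by auto
        have "(g ^^ i) (f y) = (f ^^ 4) ((g ^^ i) (f y))" using f4 giP fP y by metis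
        also have "\<dots> = f ((f ^^ 3) ((g ^^ i) (f y)))"
          by (simp add: numeral_eq_Suc)
        also have "\<dots> = f ((g ^^ (m ^ 3 * i)) ((f ^^ 3) (f y)))" using fjgi fP y by metis
        also have "(f ^^ 3) (f y) = (f ^^ 4) y"
          by (simp add: numeral_eq_Suc)
        also have "\<dots> = y" using f4 y by blast
        finally have "Y = cls (f ((g ^^ (m ^ 3 * i)) y))" using i by simp
        also have "\<dots> = Fc (cls ((g ^^ (m ^ 3 * i)) y))" using Fc_cls giP y by metis
        finally show "Y \<in> Fc ` N y" unfolding N_def by blast
      qed
      show "Fc ` N y \<subseteq> N (f y)"
      proof
        fix Y assume "Y \<in> Fc ` N y"
        then obtain i where i: "Y = Fc (cls ((g ^^ i) y))" unfolding N_def by auto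
        have "Y = cls (f ((g ^^ i) y))" using i Fc_cls giP y by metis
        also have "\<dots> = cls ((g ^^ (m * i)) (f y))" using fgi y by metis
        finally show "Y \<in> N (f y)" unfolding N_def by blast
      qed
    qed
    finally show ?thesis unfolding T_def y_def .
  qed
  have Tfin: "finite (T j) \<and> card (T j) dvd n" for j
    unfolding T_def using Ncard fjP x by blast
  have Tanti: "card (T (Suc j)) \<le> card (T j)" for j
    unfolding T_Suc using card_image_le Tfin by blast
  have Tanti2: "card (T (j + l)) \<le> card (T j)" for j l
  proof (induction l)
    case 0 then show ?case by simp
  next
    case (Suc l) then show ?case using Tanti[of "j + l"] by simp
  qed
  have T4k: "T (4 * k) = T 0" for k unfolding T_def using f4k x by simp
  have Tc: "card (T j) = card (T 0)" for j
  proof -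
    have a: "card (T j) \<le> card (T 0)" using Tanti2[of 0 j] by simp
    have "card (T (j + 3 * j)) \<le> card (T j)" by (rule Tanti2)
    moreover have "T (j + 3 * j) = T 0" using T4k[of j] by (simp add: algebra_simps)
    ultimately show ?thesis using a by simp
  qed
  have rT: "finite (range T) \<and> card (range T) dvd 4"
  proof (rule seq_period_card)
    show "\<And>i k. T i = T k \<Longrightarrow> T (Suc i) = T (Suc k)" using T_Suc by simp
    show "T 4 = T 0" using T4k[of 1] by simp
  qed simp
  have disj: "pairwise disjnt (range T)"
  proof (rule pairwiseI)
    fix A B assume "A \<in> range T" "B \<in> range T" "A \<noteq> B"
    then obtain i k where A: "A = T i" and B: "B = T k" by auto
    show "disjnt A B"
    proof (rule ccontr)
      assume "\<not> disjnt A B"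
      then obtain Y where "Y \<in> T i" "Y \<in> T k" unfolding A B disjnt_def by auto
      then obtain p q where p: "Y = cls ((g ^^ p) ((f ^^ i) x))" and q: "Y = cls ((g ^^ q) ((f ^^ k) x))"
        unfolding T_def N_def by auto
      have P1: "(g ^^ p) ((f ^^ i) x) \<in> P" and P2: "(g ^^ q) ((f ^^ k) x) \<in> P"
        using giP fjP x by auto
      have "((g ^^ p) ((f ^^ i) x), (g ^^ q) ((f ^^ k) x)) \<in> R"
        using p q cls_eq[OF P1 P2] by simp
      then have "N ((g ^^ p) ((f ^^ i) x)) = N ((g ^^ q) ((f ^^ k) x))" by (rule Ncls)
      then have "T i = T k" unfolding T_def using Nshift fjP x by metis
      then show False using \<open>A \<noteq> B\<close> A B by simp
    qed
  qed
  have O: "{R``{(g ^^ i) ((f ^^ j) x)} | i j. True} = \<Union> (range T)"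
    unfolding T_def N_def cls_def by auto
  have "card (\<Union> (range T)) = sum card (range T)"
    by (rule card_Union_disjoint[OF disj]) (use Tfin in auto)
  also have "\<dots> = card (range T) * card (T 0)"
  proof -
    have "sum card (range T) = sum (\<lambda>_. card (T 0)) (range T)"
      by (rule sum.cong) (simp, clarsimp, rule Tc)
    then show ?thesis by simp
  qed
  finally have "card {R``{(g ^^ i) ((f ^^ j) x)} | i j. True} = card (range T) * card (T 0)"
    using O by simp
  then show ?thesis using rT Tfin[of 0] by (simp add: mult_dvd_mono)
qed


locale perf_setup =
  fixes t n a b x1 x2 :: nat
  assumes t1: "t \<ge> 1" and nd: "n = 2 * t^2 + 2 * t + 1" and an: "a < n" and bn: "b < n"
    and ab0: "(a, b) \<noteq> (0, 0)"
    and perf: "is_perfect n (lin_code n a b)" and terr: "t_error_correcting n t (lin_code n a b)"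
    and x1n: "x1 < n" and x2n: "x2 < n"
begin

abbreviation "N \<equiv> int n"

definition lw :: "int \<Rightarrow> int" where "lw z = min (z mod N) (N - z mod N)"

definition inK :: "int \<Rightarrow> int \<Rightarrow> bool" where
  "inK u v \<longleftrightarrow> (\<exists>k. N dvd (u - k * int a) \<and> N dvd (v - k * int b))"

lemma n5: "n \<ge> 5"
proof -
  have "t^2 \<ge> 1" using t1 by simp
  then show ?thesis using nd t1 by linarith
qed

lemma N_odd: "N = 2 * int (t^2 + t) + 1" using nd by simp

lemma Npos: "N > 0" using n5 by simp

lemma lw_ge0: "0 \<le> lw z" unfolding lw_def using Npos
  by (simp add: pos_mod_bound order_less_imp_le)

lemma lw_bound: "2 * lw z \<le> N - 1"
proof -
  have m: "0 \<le> z mod N" "z mod N < N" using Npos by auto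
  have "2 * lw z \<le> N" unfolding lw_def
    by (cases "z mod N \<le> N - z mod N") (simp_all add: min_def)
  moreover have "2 * lw z \<noteq> N"
  proof
    assume "2 * lw z = N"
    then have "2 * lw z = 2 * int (t^2 + t) + 1" using N_odd by simp
    then show False by presburger
  qed
  ultimately show ?thesis by linarith
qed

lemma lw_cong: "N dvd (z - w) \<Longrightarrow> lw z = lw w"
  unfolding lw_def by (metis mod_eq_dvd_iff)

lemma lw_mod: "lw (z mod N) = lw z"
  by (rule lw_cong) (simp add: mod_eq_dvd_iff[symmetric])

lemma lw_neg: "lw (- z) = lw z"
proof (cases "z mod N = 0")
  case True
  then have "(- z) mod N = 0" by (simp add: zmod_zminus1_eq_if)
  then show ?thesis using True unfolding lw_def by simp
next
  case False
  then have "(- z) mod N = N - z mod N" by (simp add: zmod_zminus1_eq_if)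
  then show ?thesis unfolding lw_def by simp
qed

lemma lw_sym: "lw (z - w) = lw (w - z)"
  using lw_neg[of "z - w"] by simp

lemma lw_small: "0 \<le> z \<Longrightarrow> z + z < N \<Longrightarrow> lw z = z"
  unfolding lw_def by simp

lemma lw_rep: "\<exists>z'. N dvd (z - z') \<and> \<bar>z'\<bar> = lw z"
proof (cases "z mod N \<le> N - z mod N")
  case True
  have "N dvd (z - z mod N)" by (simp add: mod_eq_dvd_iff[symmetric])
  moreover have "\<bar>z mod N\<bar> = lw z" using True Npos unfolding lw_def by simp
  ultimately show ?thesis by blast
next
  case False
  have "N dvd (z - (z mod N - N))"
  proof -
    have e: "z - (z mod N - N) = (z - z mod N) + N" by simp
    have "N dvd (z - z mod N)" by (simp add: mod_eq_dvd_iff[symmetric])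
    then show ?thesis unfolding e by (metis dvd_add dvd_refl)
  qed
  moreover have "\<bar>z mod N - N\<bar> = lw z" using False Npos unfolding lw_def
    by (simp add: pos_mod_bound order_less_imp_le)
  ultimately show ?thesis by blast
qed

lemma lw_abs: "lw z \<le> \<bar>z\<bar>"
proof (cases "0 \<le> z")
  case True
  then have "z mod N \<le> z" using Npos by (simp add: zmod_le_nonneg_dividend)
  then show ?thesis using True unfolding lw_def by simp
next
  case False
  then have "(- z) mod N \<le> - z" using Npos by (simp add: zmod_le_nonneg_dividend)
  then have "lw (- z) \<le> - z" unfolding lw_def by simp
  then show ?thesis using False lw_neg by simp
qed

lemma lw_zero: "lw z = 0 \<Longrightarrow> N dvd z"
  unfolding lw_def using Npos
  by (metis diff_gt_0_iff_gt dvd_eq_mod_eq_0 min_def pos_mod_bound order_less_irrefl)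

lemma lw_tri: "lw (z + w) \<le> lw z + lw w"
proof -
  obtain z' where z': "N dvd (z - z')" "\<bar>z'\<bar> = lw z" using lw_rep by blast
  obtain w' where w': "N dvd (w - w')" "\<bar>w'\<bar> = lw w" using lw_rep by blast
  have "N dvd ((z + w) - (z' + w'))"
  proof -
    have e: "(z + w) - (z' + w') = (z - z') + (w - w')" by simp
    show ?thesis unfolding e using z'(1) w'(1) by (rule dvd_add)
  qed
  then have "lw (z + w) = lw (z' + w')" by (rule lw_cong)
  also have "\<dots> \<le> \<bar>z' + w'\<bar>" by (rule lw_abs)
  also have "\<dots> \<le> \<bar>z'\<bar> + \<bar>w'\<bar>" by (rule abs_triangle_ineq)
  finally show ?thesis using z' w' by simp
qed

lemma lw_tri_diff: "lw z \<le> lw (z - s) + lw s"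
  using lw_tri[of "z - s" s] by simp

lemma lw_eq_case:
  assumes s: "0 < s" "s + s < N" and e: "lw w = lw (w - s) + s"
  shows "\<exists>v. s \<le> v \<and> 2 * v < N \<and> N dvd (w - v)"
proof -
  define m where "m = w mod N"
  have m: "0 \<le> m" "m < N" unfolding m_def using Npos by auto
  have dv: "N dvd (w - m)" unfolding m_def by (simp add: mod_eq_dvd_iff[symmetric])
  have lwm: "lw w = min m (N - m)" unfolding lw_def m_def by simp
  have "N dvd ((w - s) - (m - s))" using dv by simp
  then have lws: "lw (w - s) = lw (m - s)" by (rule lw_cong)
  show ?thesis
  proof (cases "2 * m < N")
    case True
    then have "lw w = m" using lwm by simp
    then have "lw (m - s) = m - s" using e lws by simp
    then have "m \<ge> s" using lw_ge0[of "m - s"] by simp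
    then show ?thesis using True dv by blast
  next
    case False
    then have lw1: "lw w = N - m" using lwm by simp
    have "(m - s) mod N = m - s" using False s m by (intro mod_pos_pos_trivial) linarith+
    then have "lw (m - s) = min (m - s) (N - (m - s))" unfolding lw_def by simp
    moreover have "lw (m - s) = N - m - s" using e lws lw1 by simp
    ultimately have "m - s = N - m - s \<or> N - (m - s) = N - m - s" by linarith
    then have "2 * m = N \<or> s = 0" by linarith
    then have False
    proof
      assume "2 * m = N"
      then have "2 * m = 2 * int (t^2 + t) + 1" using N_odd by simp
      then show False by presburger
    qed (use s in simp)
    then show ?thesis ..
  qed
qed

lemma zn2_iff: "p \<in> zn2 n \<longleftrightarrow> fst p < n \<and> snd p < n"
  unfolding zn2_def by (cases p) auto

lemma lee_dist_int:
  assumes "u \<in> zn2 n" "v \<in> zn2 n"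
  shows "int (lee_dist n u v) = lw (int (fst u) - int (fst v)) + lw (int (snd u) - int (snd v))"
proof -
  have gen: "int (min ((x + n - y) mod n) (n - (x + n - y) mod n)) = lw (int x - int y)"
    if "y < n" for x y
  proof -
    have "int ((x + n - y) mod n) = (int x - int y) mod N"
    proof -
      have "int ((x + n - y) mod n) = int (x + n - y) mod N" by (simp add: zmod_int)
      also have "int (x + n - y) = (int x - int y) + N" using that by simp
      also have "((int x - int y) + N) mod N = (int x - int y) mod N" by simp
      finally show ?thesis .
    qed
    moreover have "(x + n - y) mod n < n" using n5 by simp
    ultimately show ?thesis unfolding lw_def by (simp add: of_nat_diff)
  qed
  show ?thesis using assms unfolding lee_dist_def lee_wt_def zn2_iff
    by (simp add: gen)
qed

lemma inK_add: "inK u v \<Longrightarrow> inK u' v' \<Longrightarrow> inK (u + u') (v + v')"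
proof -
  assume "inK u v" "inK u' v'"
  then obtain k k' where k: "N dvd (u - k * int a)" "N dvd (v - k * int b)"
    and k': "N dvd (u' - k' * int a)" "N dvd (v' - k' * int b)" unfolding inK_def by blast
  have "u + u' - (k + k') * int a = (u - k * int a) + (u' - k' * int a)"
    "v + v' - (k + k') * int b = (v - k * int b) + (v' - k' * int b)" by algebra+
  then show ?thesis unfolding inK_def using k k' by (metis dvd_add)
qed

lemma inK_scale: "inK u v \<Longrightarrow> inK (c * u) (c * v)"
proof -
  assume "inK u v"
  then obtain k where k: "N dvd (u - k * int a)" "N dvd (v - k * int b)" unfolding inK_def by blast
  have "c * u - (c * k) * int a = c * (u - k * int a)" "c * v - (c * k) * int b = c * (v - k * int b)"
    by algebra+
  then show ?thesis unfolding inK_def using k by (metis dvd_mult)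
qed

lemma inK_neg: "inK u v \<Longrightarrow> inK (- u) (- v)"
  using inK_scale[of u v "-1"] by simp

lemma inK_diff: "inK u v \<Longrightarrow> inK u' v' \<Longrightarrow> inK (u - u') (v - v')"
  using inK_add[of u v "- u'" "- v'"] inK_neg[of u' v'] by simp

lemma inK_cong: "inK u v \<Longrightarrow> N dvd (u' - u) \<Longrightarrow> N dvd (v' - v) \<Longrightarrow> inK u' v'"
proof -
  assume "inK u v" and d1: "N dvd (u' - u)" and d2: "N dvd (v' - v)"
  then obtain k where k: "N dvd (u - k * int a)" "N dvd (v - k * int b)" unfolding inK_def by blast
  have "u' - k * int a = (u' - u) + (u - k * int a)" "v' - k * int b = (v' - v) + (v - k * int b)"
    by algebra+
  then show ?thesis unfolding inK_def using k d1 d2 by (metis dvd_add)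
qed

lemma inK_ab: "inK (int a) (int b)"
  unfolding inK_def by (rule exI[of _ 1]) simp

lemma inK_mult_ab: "inK u v \<Longrightarrow> \<exists>k. N dvd (u - k * int a) \<and> N dvd (v - k * int b)"
  unfolding inK_def .

lemma C0_mem: "c \<in> lin_code n a b \<longleftrightarrow> (\<exists>k. c = ((k * a) mod n, (k * b) mod n))"
  unfolding lin_code_def by auto

lemma C0_zn2: "c \<in> lin_code n a b \<Longrightarrow> c \<in> zn2 n"
  unfolding C0_mem zn2_iff using n5 by auto

lemma C0_inK: "c \<in> lin_code n a b \<Longrightarrow> inK (int (fst c)) (int (snd c))"
proof -
  assume "c \<in> lin_code n a b"
  then obtain k where c: "c = ((k * a) mod n, (k * b) mod n)" unfolding C0_mem by blast
  have "N dvd (int ((k * a) mod n) - int k * int a)" "N dvd (int ((k * b) mod n) - int k * int b)"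
    by (simp_all add: zmod_int mod_eq_dvd_iff[symmetric] flip: of_nat_mult)
  then show ?thesis unfolding inK_def c by auto
qed

lemma inK_C0: "inK u v \<Longrightarrow> (nat (u mod N), nat (v mod N)) \<in> lin_code n a b"
proof -
  assume "inK u v"
  then obtain k where k: "N dvd (u - k * int a)" "N dvd (v - k * int b)" unfolding inK_def by blast
  define k' where "k' = nat (k mod N)"
  have kk: "int k' = k mod N" unfolding k'_def using Npos by simp
  have "int ((k' * a) mod n) = u mod N"
  proof -
    have "int ((k' * a) mod n) = (int k' * int a) mod N" by (simp add: zmod_int)
    also have "\<dots> = (k * int a) mod N" unfolding kk by (simp add: mod_mult_left_eq)
    also have "\<dots> = u mod N" using k(1) by (metis mod_eq_dvd_iff dvd_diff_commute)
    finally show ?thesis .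
  qed
  moreover have "int ((k' * b) mod n) = v mod N"
  proof -
    have "int ((k' * b) mod n) = (int k' * int b) mod N" by (simp add: zmod_int)
    also have "\<dots> = (k * int b) mod N" unfolding kk by (simp add: mod_mult_left_eq)
    also have "\<dots> = v mod N" using k(2) by (metis mod_eq_dvd_iff dvd_diff_commute)
    finally show ?thesis .
  qed
  ultimately have "(nat (u mod N), nat (v mod N)) = ((k' * a) mod n, (k' * b) mod n)"
    by (metis nat_int)
  then show ?thesis unfolding C0_mem by blast
qed


definition dd where "dd = min_lee_dist n (lin_code n a b)"
definition rr where "rr = (dd - 1) div 2"

lemma zn2_fin: "finite (zn2 n)" unfolding zn2_def by simp

lemma C0_fin: "finite (lin_code n a b)"
  using C0_zn2 zn2_fin by (meson finite_subset subsetI)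

lemma zero_C0: "(0, 0) \<in> lin_code n a b" unfolding C0_mem by (rule exI[of _ 0]) simp
lemma ab_C0: "(a, b) \<in> lin_code n a b" unfolding C0_mem by (rule exI[of _ 1]) (simp add: an bn)

lemma Dset_fin: "finite {lee_dist n u v | u v. u \<in> lin_code n a b \<and> v \<in> lin_code n a b \<and> u \<noteq> v}"
proof -
  have "{lee_dist n u v | u v. u \<in> lin_code n a b \<and> v \<in> lin_code n a b \<and> u \<noteq> v}
        \<subseteq> (\<lambda>(u, v). lee_dist n u v) ` (lin_code n a b \<times> lin_code n a b)" by auto
  then show ?thesis using C0_fin by (meson finite_SigmaI finite_imageI finite_subset)
qed

lemma dd_le: "u \<in> lin_code n a b \<Longrightarrow> v \<in> lin_code n a b \<Longrightarrow> u \<noteq> v \<Longrightarrow> dd \<le> lee_dist n u v"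
  unfolding dd_def min_lee_dist_def by (rule Min_le[OF Dset_fin]) blast

lemma dd_in: "\<exists>u v. u \<in> lin_code n a b \<and> v \<in> lin_code n a b \<and> u \<noteq> v \<and> dd = lee_dist n u v"
proof -
  have ne: "{lee_dist n u v | u v. u \<in> lin_code n a b \<and> v \<in> lin_code n a b \<and> u \<noteq> v} \<noteq> {}"
    using zero_C0 ab_C0 ab0 by blast
  show ?thesis unfolding dd_def min_lee_dist_def using Min_in[OF Dset_fin ne] by blast
qed

lemma dd_ge: "2 * t + 1 \<le> dd" using terr unfolding t_error_correcting_def dd_def .

lemma dd_bound: "2 * int dd \<le> 2 * N - 2"
proof -
  obtain u v where uv: "u \<in> lin_code n a b" "v \<in> lin_code n a b" "dd = lee_dist n u v" using dd_in by blast
  have "int dd = lw (int (fst u) - int (fst v)) + lw (int (snd u) - int (snd v))"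
    using lee_dist_int C0_zn2 uv by simp
  then show ?thesis using lw_bound[of "int (fst u) - int (fst v)"] lw_bound[of "int (snd u) - int (snd v)"]
    by linarith
qed

lemma rr_ge: "t \<le> rr" unfolding rr_def using dd_ge by simp
lemma rr_dd: "2 * rr + 1 \<le> dd" unfolding rr_def using dd_ge by simp
lemma rr_N: "2 * int rr + 2 < N"
proof -
  have "2 * int rr + 1 \<le> int dd" using rr_dd by linarith
  then have le: "2 * int rr + 2 \<le> N" using dd_bound by linarith
  have "2 * int rr + 2 \<noteq> N"
  proof
    assume "2 * int rr + 2 = N"
    then have "2 * int rr + 2 = 2 * int (t^2 + t) + 1" using N_odd by simp
    then show False by presburger
  qed
  then show ?thesis using le by linarith
qed

lemma dmin_int:
  assumes "inK u v" "\<not> (N dvd u \<and> N dvd v)"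
  shows "int dd \<le> lw u + lw v"
proof -
  define c where "c = (nat (u mod N), nat (v mod N))"
  have c: "c \<in> lin_code n a b" unfolding c_def using inK_C0 assms(1) .
  have um: "int (nat (u mod N)) = u mod N" "int (nat (v mod N)) = v mod N" using Npos by auto
  have "c \<noteq> (0, 0)"
  proof
    assume "c = (0, 0)"
    then have "u mod N = 0" "v mod N = 0" unfolding c_def using um by (metis fst_conv snd_conv of_nat_0)+
    then show False using assms(2) by auto
  qed
  then have "dd \<le> lee_dist n c (0, 0)" using dd_le c zero_C0 by blast
  moreover have "int (lee_dist n c (0, 0)) = lw u + lw v"
    using lee_dist_int[OF C0_zn2[OF c] C0_zn2[OF zero_C0]] um lw_mod unfolding c_def by simp
  ultimately show ?thesis by linarith
qed

lemma cover_int: "\<exists>u v. inK u v \<and> lw (q1 - u) + lw (q2 - v) \<le> int rr"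
proof -
  have cov: "(\<Union>c\<in>lin_code n a b. lee_ball n rr c) = zn2 n"
    using perf unfolding is_perfect_def rr_def dd_def .
  define p where "p = (nat (q1 mod N), nat (q2 mod N))"
  have pm: "int (fst p) = q1 mod N" "int (snd p) = q2 mod N" unfolding p_def using Npos by auto
  have "p \<in> zn2 n" unfolding zn2_iff using pm Npos
    by (metis of_nat_less_iff pos_mod_bound)
  then obtain c where c: "c \<in> lin_code n a b" "p \<in> lee_ball n rr c" using cov by blast
  then have "lee_dist n p c \<le> rr" unfolding lee_ball_def by simp
  then have "lw (int (fst p) - int (fst c)) + lw (int (snd p) - int (snd c)) \<le> int rr"
    using lee_dist_int[OF \<open>p \<in> zn2 n\<close> C0_zn2[OF c(1)]] by linarith
  moreover have "lw (int (fst p) - int (fst c)) = lw (q1 - int (fst c))"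
    by (rule lw_cong) (simp add: pm mod_eq_dvd_iff[symmetric])
  moreover have "lw (int (snd p) - int (snd c)) = lw (q2 - int (snd c))"
    by (rule lw_cong) (simp add: pm mod_eq_dvd_iff[symmetric])
  ultimately show ?thesis using C0_inK[OF c(1)] by auto
qed

lemma dvd_small: "N dvd z \<Longrightarrow> \<bar>z\<bar> < N \<Longrightarrow> z = 0"
proof (rule ccontr)
  assume d: "N dvd z" and l: "\<bar>z\<bar> < N" and z: "z \<noteq> 0"
  have "\<bar>N\<bar> \<le> \<bar>z\<bar>" by (rule dvd_imp_le_int[OF z d])
  then show False using l Npos by simp
qed

abbreviation "R \<equiv> int rr"

lemma geoQ:
  assumes j: "1 \<le> j" "j \<le> R"
  shows "\<exists>u. j \<le> u \<and> u \<le> R + j \<and> inK u (2 * R + 1 - u)"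
proof -
  obtain w1 w2 where w: "inK w1 w2" and cv: "lw (j - w1) + lw ((R + 1 - j) - w2) \<le> R"
    using cover_int by blast
  have RN: "2 * R + 2 < N" using rr_N .
  have lj: "lw j = j" using j RN by (intro lw_small) linarith+
  have lj2: "lw (R + 1 - j) = R + 1 - j" using j RN by (intro lw_small) linarith+
  have nd: "\<not> (N dvd w1 \<and> N dvd w2)"
  proof
    assume h: "N dvd w1 \<and> N dvd w2"
    have "lw (j - w1) = lw j" by (rule lw_cong) (use h in simp)
    moreover have "lw ((R + 1 - j) - w2) = lw (R + 1 - j)" by (rule lw_cong) (use h in simp)
    ultimately show False using cv lj lj2 by linarith
  qed
  have dm: "int dd \<le> lw w1 + lw w2" using dmin_int[OF w nd] .
  have dr: "2 * R + 1 \<le> int dd" using rr_dd by linarith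
  have t1': "lw w1 \<le> lw (w1 - j) + j" using lw_tri_diff[of w1 j] lj by simp
  have t2': "lw w2 \<le> lw (w2 - (R + 1 - j)) + (R + 1 - j)" using lw_tri_diff[of w2 "R + 1 - j"] lj2 by simp
  have s1: "lw (w1 - j) = lw (j - w1)" by (rule lw_sym)
  have s2: "lw (w2 - (R + 1 - j)) = lw ((R + 1 - j) - w2)" by (rule lw_sym)
  have e1: "lw w1 = lw (w1 - j) + j" using t1' t2' s1 s2 cv dm dr by linarith
  have e2: "lw w2 = lw (w2 - (R + 1 - j)) + (R + 1 - j)" using t1' t2' s1 s2 cv dm dr by linarith
  have e3: "lw w1 + lw w2 = 2 * R + 1" using t1' t2' s1 s2 cv dm dr by linarith
  obtain v1 where v1: "j \<le> v1" "2 * v1 < N" "N dvd (w1 - v1)"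
    using lw_eq_case[of j w1] e1 j RN by auto
  obtain v2 where v2: "R + 1 - j \<le> v2" "2 * v2 < N" "N dvd (w2 - v2)"
    using lw_eq_case[of "R + 1 - j" w2] e2 j RN by auto
  have "lw w1 = lw v1" using v1(3) by (rule lw_cong)
  also have "\<dots> = v1" using v1 j by (intro lw_small) linarith+
  finally have l1: "lw w1 = v1" .
  have "lw w2 = lw v2" using v2(3) by (rule lw_cong)
  also have "\<dots> = v2" using v2 j by (intro lw_small) linarith+
  finally have l2: "lw w2 = v2" .
  have sum: "v2 = 2 * R + 1 - v1" using e3 l1 l2 by linarith
  have "inK v1 (2 * R + 1 - v1)"
  proof (rule inK_cong[OF w])
    show "N dvd (v1 - w1)" by (subst dvd_diff_commute) (rule v1(3))
    have "N dvd (v2 - w2)" by (subst dvd_diff_commute) (rule v2(3))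
    then show "N dvd (2 * R + 1 - v1 - w2)" using sum by simp
  qed
  then show ?thesis using v1 v2 sum by (intro exI[of _ v1]) auto
qed

lemma abs_ge_cases: "c \<le> \<bar>x::int\<bar> \<Longrightarrow> c \<le> x \<or> c \<le> - x"
  by (cases "0 \<le> x") auto

lemma abs_lt_lin: "x < c \<Longrightarrow> - x < c \<Longrightarrow> \<bar>x::int\<bar> < c"
  by auto

lemma sepK:
  assumes "inK u (2 * R + 1 - u)" "inK u' (2 * R + 1 - u')" "u \<noteq> u'" "\<bar>u - u'\<bar> < N"
  shows "R + 1 \<le> \<bar>u - u'\<bar>"
proof -
  have k: "inK (u - u') (u' - u)" using inK_diff[OF assms(1,2)] by simp
  have "\<not> N dvd (u - u')" using dvd_small assms(3,4) by force
  then have "int dd \<le> lw (u - u') + lw (u' - u)" using dmin_int[OF k] by blast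
  moreover have "lw (u' - u) = lw (u - u')" by (rule lw_sym)
  moreover have "2 * R + 1 \<le> int dd" using rr_dd by linarith
  moreover have "lw (u - u') \<le> \<bar>u - u'\<bar>" by (rule lw_abs)
  ultimately show ?thesis by linarith
qed

end

context perf_setup begin

lemma geo:
  "(\<exists>u. (u = R \<or> u = R + 1) \<and> inK u (2 * R + 1 - u)) \<or>
   (\<exists>u. inK u (2 * R + 1 - u) \<and> inK (u + R + 1) (R - u))"
proof -
  have R1: "1 \<le> R" using rr_ge t1 by linarith
  have RN: "2 * R + 2 < N" using rr_N .
  have o1: "(1::int) \<le> 1" by simp
  from geoQ[OF o1 R1] obtain u where u: "1 \<le> u" "u \<le> R + 1" "inK u (2 * R + 1 - u)" by blast
  from geoQ[OF R1 order_refl] obtain u' where u': "R \<le> u'" "u' \<le> R + R" "inK u' (2 * R + 1 - u')"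
    by blast
  show ?thesis
  proof (cases "u = u'")
    case True
    then show ?thesis using u u' by (intro disjI1 exI[of _ u]) auto
  next
    case False
    have "\<bar>u - u'\<bar> < N" using u u' RN by (intro abs_lt_lin) linarith+
    then have "R + 1 \<le> \<bar>u - u'\<bar>" using sepK[OF u(3) u'(3) False] by blast
    then have "R + 1 \<le> u - u' \<or> R + 1 \<le> -(u - u')" by (rule abs_ge_cases)
    then have uu: "u' \<ge> u + R + 1"
    proof
      assume "R + 1 \<le> u - u'" then show ?thesis using u u' R1 by linarith
    qed (use u u' R1 in linarith)
    obtain u'' where u'': "u + 1 \<le> u''" "u'' \<le> R + (u + 1)" "inK u'' (2 * R + 1 - u'')"
    proof -
      have "1 \<le> u + 1" "u + 1 \<le> R" using u uu u' by linarith+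
      from geoQ[OF this] show ?thesis using that by blast
    qed
    have "u \<noteq> u''" using u'' by linarith
    moreover have "\<bar>u - u''\<bar> < N" using u u'' uu u' RN by (intro abs_lt_lin) linarith+
    ultimately have "R + 1 \<le> \<bar>u - u''\<bar>" using sepK[OF u(3) u''(3)] by blast
    then have "R + 1 \<le> u - u'' \<or> R + 1 \<le> -(u - u'')" by (rule abs_ge_cases)
    then have "u'' = u + R + 1"
    proof
      assume "R + 1 \<le> u - u''" then show ?thesis using u'' by linarith
    qed (use u'' in linarith)
    then have "inK (u + R + 1) (R - u)" using u''(3) by (simp add: algebra_simps)
    then show ?thesis using u(3) by blast
  qed
qed

lemma inK_kill: "inK u v \<Longrightarrow> N dvd (k * int a) \<Longrightarrow> N dvd (k * int b) \<Longrightarrow> N dvd (k * u) \<and> N dvd (k * v)"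
proof -
  assume "inK u v" and ka: "N dvd (k * int a)" and kb: "N dvd (k * int b)"
  then obtain m where m: "N dvd (u - m * int a)" "N dvd (v - m * int b)" unfolding inK_def by blast
  have e1: "k * (u - m * int a) + m * (k * int a) = k * u" by algebra
  have e2: "k * (v - m * int b) + m * (k * int b) = k * v" by algebra
  have "N dvd (k * (u - m * int a) + m * (k * int a))" by (rule dvd_add[OF dvd_mult[OF m(1)] dvd_mult[OF ka]])
  moreover have "N dvd (k * (v - m * int b) + m * (k * int b))" by (rule dvd_add[OF dvd_mult[OF m(2)] dvd_mult[OF kb]])
  ultimately show ?thesis by (simp only: e1 e2)
qed

lemma ord_n: "N dvd (k * int a) \<Longrightarrow> N dvd (k * int b) \<Longrightarrow> N dvd k"
proof -
  assume ka: "N dvd (k * int a)" and kb: "N dvd (k * int b)"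
  note kill = inK_kill[OF _ ka kb]
  from geo show ?thesis
  proof
    assume "\<exists>u. (u = R \<or> u = R + 1) \<and> inK u (2 * R + 1 - u)"
    then obtain u where u: "u = R \<or> u = R + 1" "inK u (2 * R + 1 - u)" by blast
    have h: "N dvd (k * u)" "N dvd (k * (2 * R + 1 - u))" using kill[OF u(2)] by auto
    from u(1) show ?thesis
    proof
      assume "u = R"
      then have e: "k = k * (2 * R + 1 - u) - k * u" by (simp add: algebra_simps)
      have "N dvd (k * (2 * R + 1 - u) - k * u)" using h(2) h(1) by (rule dvd_diff)
      then show ?thesis by (simp only: e[symmetric])
    next
      assume "u = R + 1"
      then have "k = k * u - k * (2 * R + 1 - u)" by (simp add: algebra_simps)
      then show ?thesis using h by (metis dvd_diff)
    qed
  next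
    assume "\<exists>u. inK u (2 * R + 1 - u) \<and> inK (u + R + 1) (R - u)"
    then obtain u where u: "inK u (2 * R + 1 - u)" "inK (u + R + 1) (R - u)" by blast
    have h: "N dvd (k * u)" "N dvd (k * (2 * R + 1 - u))" "N dvd (k * (u + R + 1))"
      using kill[OF u(1)] kill[OF u(2)] by auto
    have e: "k = 2 * (k * (u + R + 1) - k * u) - (k * u + k * (2 * R + 1 - u))" by algebra
    have d1: "N dvd (k * (u + R + 1) - k * u)" using h by (intro dvd_diff) auto
    have d2: "N dvd (k * u + k * (2 * R + 1 - u))" using h by (intro dvd_add) auto
    have "N dvd (2 * (k * (u + R + 1) - k * u) - (k * u + k * (2 * R + 1 - u)))"
    proof -
      have d3: "N dvd (2 * (k * (u + R + 1) - k * u))" using d1 by (rule dvd_mult)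
      show ?thesis using d3 d2 by (rule dvd_diff)
    qed
    then show ?thesis by (simp only: e[symmetric])
  qed
qed

end

context perf_setup begin

lemma NN: "N = 2 * int t * int t + 2 * int t + 1"
  using nd by (simp add: power2_eq_square)

lemma diamond1: "0 \<le> i \<Longrightarrow> i \<le> Q \<Longrightarrow> 0 \<le> j \<Longrightarrow> j \<le> Q \<Longrightarrow> \<bar>i - j\<bar> + \<bar>i + j - Q\<bar> \<le> (Q::int)"
  by (auto simp: abs_if)

lemma rr_eq: "rr = t"
proof (rule ccontr)
  assume "rr \<noteq> t"
  then have rt: "t + 1 \<le> rr" using rr_ge by simp
  define Q where "Q = int t + 1"
  have Q1: "1 \<le> Q" unfolding Q_def by simp
  define D1 where "D1 = (\<lambda>(i, j). (i - j, i + j - Q)) ` ({0..Q} \<times> {0..Q})"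
  define D2 where "D2 = (\<lambda>(i, j). (i - j, i + j - Q + 1)) ` ({0..Q - 1} \<times> {0..Q - 1})"
  define D where "D = D1 \<union> D2"
  have fD1: "finite D1" unfolding D1_def by simp
  have fD2: "finite D2" unfolding D2_def by simp
  have cD1: "card D1 = nat (Q + 1) * nat (Q + 1)"
  proof -
    have "inj_on (\<lambda>(i, j). (i - j, i + j - Q)) ({0..Q} \<times> {0..Q})"
      by (rule inj_onI) auto
    then have "card D1 = card ({0..Q} \<times> {0..Q})" unfolding D1_def by (rule card_image)
    then show ?thesis by (simp add: card_cartesian_product)
  qed
  have cD2: "card D2 = nat Q * nat Q"
  proof -
    have "inj_on (\<lambda>(i, j). (i - j, i + j - Q + 1)) ({0..Q - 1} \<times> {0..Q - 1})"
      by (rule inj_onI) auto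
    then have "card D2 = card ({0..Q - 1} \<times> {0..Q - 1})" unfolding D2_def by (rule card_image)
    then show ?thesis by (simp add: card_cartesian_product)
  qed
  have disj: "D1 \<inter> D2 = {}"
  proof (rule ccontr)
    assume "D1 \<inter> D2 \<noteq> {}"
    then obtain v where v1: "v \<in> D1" and v2: "v \<in> D2" by blast
    from v1 obtain i j where e1: "v = (i - j, i + j - Q)" unfolding D1_def by auto
    from v2 obtain i' j' where e2: "v = (i' - j', i' + j' - Q + 1)" unfolding D2_def by auto
    have "i - j = i' - j'" "i + j - Q = i' + j' - Q + 1" using e1 e2 by simp_all
    then have "2 * i = 2 * i' + 1" by linarith
    then show False by presburger
  qed
  have cD: "card D = nat (Q + 1) * nat (Q + 1) + nat Q * nat Q"
    unfolding D_def using card_Un_disjoint[OF fD1 fD2 disj] cD1 cD2 by simp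
  have fD: "finite D" unfolding D_def using fD1 fD2 by simp
  have bnd: "\<bar>fst v\<bar> + \<bar>snd v\<bar> \<le> Q" if "v \<in> D" for v
  proof -
    from that consider (a) "v \<in> D1" | (b) "v \<in> D2" unfolding D_def by blast
    then show ?thesis
    proof cases
      case a
      then obtain i j where "v = (i - j, i + j - Q)" "0 \<le> i" "i \<le> Q" "0 \<le> j" "j \<le> Q"
        unfolding D1_def by auto
      then show ?thesis using diamond1[of i Q j] by simp
    next
      case b
      then obtain i j where "v = (i - j, i + j - Q + 1)" "0 \<le> i" "i \<le> Q - 1" "0 \<le> j" "j \<le> Q - 1"
        unfolding D2_def by auto
      then show ?thesis using diamond1[of i "Q - 1" j] by simp
    qed
  qed
  have tsq: "int t \<le> int t * int t" using t1 by simp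
  have it1: "1 \<le> int t" using t1 by simp
  have QN: "2 * Q < N" using NN tsq it1 Q_def by linarith
  have r1: "2 * int rr + 1 \<le> int dd" using rr_dd by linarith
  have r2: "int t + 1 \<le> int rr" using rt by linarith
  have ddQ: "2 * Q + 1 \<le> int dd" using r1 r2 Q_def by linarith
  define Psi where "Psi = (\<lambda>(k::nat, v::int \<times> int).
      (nat ((int k * int a + fst v) mod N), nat ((int k * int b + snd v) mod N)))"
  have Psi_zn2: "Psi ` ({0..<n} \<times> D) \<subseteq> zn2 n"
  proof
    fix p assume "p \<in> Psi ` ({0..<n} \<times> D)"
    then obtain k v where p: "p = Psi (k, v)" by auto
    have "nat ((int k * int a + fst v) mod N) < n" "nat ((int k * int b + snd v) mod N) < n"
      using Npos by (simp_all add: nat_less_iff)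
    then show "p \<in> zn2 n" unfolding p Psi_def zn2_iff by simp
  qed
  have Psi_inj: "inj_on Psi ({0..<n} \<times> D)"
  proof (rule inj_onI)
    fix p p' assume p: "p \<in> {0..<n} \<times> D" and p': "p' \<in> {0..<n} \<times> D" and e: "Psi p = Psi p'"
    obtain k x y where kv: "p = (k, (x, y))" by (cases p) auto
    obtain k' x' y' where kv': "p' = (k', (x', y'))" by (cases p') auto
    have k: "k < n" "(x, y) \<in> D" using p kv by auto
    have k': "k' < n" "(x', y') \<in> D" using p' kv' by auto
    have m1: "(int k * int a + x) mod N = (int k' * int a + x') mod N"
      using e Npos unfolding kv kv' Psi_def by (simp add: nat_eq_iff2)
    have m2: "(int k * int b + y) mod N = (int k' * int b + y') mod N"
      using e Npos unfolding kv kv' Psi_def by (simp add: nat_eq_iff2)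
    define dk where "dk = int k - int k'"
    have d1: "N dvd ((x' - x) - dk * int a)"
    proof -
      have h: "N dvd ((int k * int a + x) - (int k' * int a + x'))" using m1 by (simp add: mod_eq_dvd_iff)
      have e: "(x' - x) - dk * int a = - ((int k * int a + x) - (int k' * int a + x'))"
        unfolding dk_def by algebra
      show ?thesis unfolding e using h by (simp only: dvd_minus_iff)
    qed
    have d2: "N dvd ((y' - y) - dk * int b)"
    proof -
      have h: "N dvd ((int k * int b + y) - (int k' * int b + y'))" using m2 by (simp add: mod_eq_dvd_iff)
      have e: "(y' - y) - dk * int b = - ((int k * int b + y) - (int k' * int b + y'))"
        unfolding dk_def by algebra
      show ?thesis unfolding e using h by (simp only: dvd_minus_iff)
    qed
    have K: "inK (x' - x) (y' - y)" unfolding inK_def using d1 d2 by blast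
    have b1: "\<bar>x\<bar> + \<bar>y\<bar> \<le> Q" using bnd[OF k(2)] by simp
    have b2: "\<bar>x'\<bar> + \<bar>y'\<bar> \<le> Q" using bnd[OF k'(2)] by simp
    have dv: "N dvd (x' - x) \<and> N dvd (y' - y)"
    proof (rule ccontr)
      assume "\<not> (N dvd (x' - x) \<and> N dvd (y' - y))"
      then have "int dd \<le> lw (x' - x) + lw (y' - y)" using dmin_int[OF K] by blast
      moreover have "lw (x' - x) \<le> \<bar>x' - x\<bar>" "lw (y' - y) \<le> \<bar>y' - y\<bar>" by (rule lw_abs)+
      moreover have "\<bar>x' - x\<bar> \<le> \<bar>x'\<bar> + \<bar>x\<bar>" "\<bar>y' - y\<bar> \<le> \<bar>y'\<bar> + \<bar>y\<bar>" by (rule abs_triangle_ineq4)+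
      ultimately show False using b1 b2 ddQ by linarith
    qed
    have "\<bar>x' - x\<bar> < N"
    proof -
      have "\<bar>x' - x\<bar> \<le> \<bar>x'\<bar> + \<bar>x\<bar>" by (rule abs_triangle_ineq4)
      moreover have "0 \<le> \<bar>y\<bar>" "0 \<le> \<bar>y'\<bar>" by simp_all
      ultimately show ?thesis using b1 b2 QN by linarith
    qed
    then have xx: "x' = x" using dvd_small dv by force
    have "\<bar>y' - y\<bar> < N"
    proof -
      have "\<bar>y' - y\<bar> \<le> \<bar>y'\<bar> + \<bar>y\<bar>" by (rule abs_triangle_ineq4)
      moreover have "0 \<le> \<bar>x\<bar>" "0 \<le> \<bar>x'\<bar>" by simp_all
      ultimately show ?thesis using b1 b2 QN by linarith
    qed
    then have yy: "y' = y" using dvd_small dv by force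
    have "N dvd (dk * int a)" using d1 xx by (simp add: dvd_minus_iff)
    moreover have "N dvd (dk * int b)" using d2 yy by (simp add: dvd_minus_iff)
    ultimately have "N dvd dk" by (rule ord_n)
    moreover have "\<bar>dk\<bar> < N" unfolding dk_def using k(1) k'(1) by simp
    ultimately have "dk = 0" by (rule dvd_small)
    then have "k = k'" unfolding dk_def by simp
    then show "p = p'" using kv kv' xx yy by simp
  qed
  have "card ({0..<n} \<times> D) \<le> card (zn2 n)"
    by (rule card_inj_on_le[OF Psi_inj Psi_zn2 zn2_fin])
  moreover have "card (zn2 n) = n * n" unfolding zn2_def by (simp add: card_cartesian_product)
  moreover have "card ({0..<n} \<times> D) = n * card D" by (simp add: card_cartesian_product)
  ultimately have "card D \<le> n" using n5 by simp
  moreover have "nat Q = t + 1" "nat (Q + 1) = t + 2" unfolding Q_def by simp_all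
  ultimately have "(t + 2) * (t + 2) + (t + 1) * (t + 1) \<le> n" using cD by simp
  then show False unfolding nd by (simp add: power2_eq_square algebra_simps)
qed

lemma R_t: "R = int t" using rr_eq by simp

lemma inK_1: "\<not> inK 1 (-1)"
proof
  assume k: "inK 1 (-1)"
  have "\<not> (N dvd 1 \<and> N dvd (-1))" using n5 by simp
  then have "int dd \<le> lw 1 + lw (-1)" using dmin_int[OF k] by blast
  moreover have "lw 1 = 1" using n5 by (intro lw_small) simp_all
  moreover have "lw (-1) = 1" using lw_neg[of 1] \<open>lw 1 = 1\<close> by simp
  ultimately show False using dd_ge t1 by linarith
qed

lemma gen_t: "inK (int t) (int t + 1) \<or> inK (int t + 1) (int t)"
proof -
  from geo show ?thesis
  proof
    assume "\<exists>u. (u = R \<or> u = R + 1) \<and> inK u (2 * R + 1 - u)"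
    then obtain u where "u = int t \<or> u = int t + 1" "inK u (2 * int t + 1 - u)" using R_t by auto
    then show ?thesis by (auto simp: algebra_simps)
  next
    assume "\<exists>u. inK u (2 * R + 1 - u) \<and> inK (u + R + 1) (R - u)"
    then obtain u where u: "inK u (2 * int t + 1 - u)" "inK (u + int t + 1) (int t - u)" using R_t by auto
    have "inK ((u + int t + 1) - u) ((int t - u) - (2 * int t + 1 - u))" by (rule inK_diff[OF u(2) u(1)])
    then have "inK (int t + 1) (- (int t + 1))" by (simp add: algebra_simps)
    then have "inK ((- 2 * int t) * (int t + 1)) ((- 2 * int t) * (- (int t + 1)))" by (rule inK_scale)
    then have "inK 1 (-1)"
    proof (rule inK_cong)
      show "N dvd (1 - (- 2 * int t) * (int t + 1))"
        unfolding NN by (simp add: algebra_simps)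
      show "N dvd (-1 - (- 2 * int t) * (- (int t + 1)))"
      proof -
        have "-1 - (- 2 * int t) * (- (int t + 1)) = - (2 * int t * int t + 2 * int t + 1)" by algebra
        then show ?thesis unfolding NN by (simp only: dvd_minus_iff dvd_refl)
      qed
    qed
    then show ?thesis using inK_1 by blast
  qed
qed

lemma dvdE': "N dvd x \<Longrightarrow> (\<And>q. x = N * q \<Longrightarrow> P) \<Longrightarrow> P" by (auto elim: dvdE)

lemma rotK_ab: "inK (- int b) (int a)"
proof -
  define T where "T = int t"
  have NT: "N = 2 * T * T + 2 * T + 1" unfolding T_def by (rule NN)
  define A where "A = int a"
  define B where "B = int b"
  from gen_t consider (c1) "inK T (T + 1)" | (c2) "inK (T + 1) T" unfolding T_def by blast
  then show ?thesis
  proof cases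
    case c1
    then obtain j where j: "N dvd (T - j * A)" "N dvd (T + 1 - j * B)" unfolding inK_def A_def B_def by blast
    obtain q1 where q1: "T - j * A = N * q1" using j(1) by (auto elim: dvdE)
    obtain q2 where q2: "T + 1 - j * B = N * q2" using j(2) by (auto elim: dvdE)
    define c where "c = (B - A) * (2 * T + 1)"
    have "inK (c * T) (c * (T + 1))" using c1 by (rule inK_scale)
    then show ?thesis unfolding A_def[symmetric] B_def[symmetric]
    proof (rule inK_cong)
      have "- B - c * T = N * (- (B * (q2 - q1) - (B - A) * q2) - (B - A))"
      proof -
        have "- B - c * T = - (B * ((T + 1 - j * B) - (T - j * A)) - (B - A) * (T + 1 - j * B)) - (B - A) * (2 * T * T + 2 * T + 1)"
          unfolding c_def by algebra
        also have "\<dots> = N * (- (B * (q2 - q1) - (B - A) * q2) - (B - A))" unfolding q1 q2 NT by algebra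
        finally show ?thesis .
      qed
      then show "N dvd (- B - c * T)" by simp
      have "A - c * (T + 1) = N * (A * (q2 - q1) - (B - A) * q1 - (B - A))"
      proof -
        have "A - c * (T + 1) = (A * ((T + 1 - j * B) - (T - j * A)) - (B - A) * (T - j * A)) - (B - A) * (2 * T * T + 2 * T + 1)"
          unfolding c_def by algebra
        also have "\<dots> = N * (A * (q2 - q1) - (B - A) * q1 - (B - A))" unfolding q1 q2 NT by algebra
        finally show ?thesis .
      qed
      then show "N dvd (A - c * (T + 1))" by simp
    qed
  next
    case c2
    then obtain j where j: "N dvd (T + 1 - j * A)" "N dvd (T - j * B)" unfolding inK_def A_def B_def by blast
    obtain q1 where q1: "T + 1 - j * A = N * q1" using j(1) by (auto elim: dvdE)
    obtain q2 where q2: "T - j * B = N * q2" using j(2) by (auto elim: dvdE)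
    define c where "c = - (A - B) * (2 * T + 1)"
    have "inK (c * (T + 1)) (c * T)" using c2 by (rule inK_scale)
    then show ?thesis unfolding A_def[symmetric] B_def[symmetric]
    proof (rule inK_cong)
      have "- B - c * (T + 1) = N * (- (B * (q1 - q2) - (A - B) * q2) + (A - B))"
      proof -
        have "- B - c * (T + 1) = - (B * ((T + 1 - j * A) - (T - j * B)) - (A - B) * (T - j * B)) + (A - B) * (2 * T * T + 2 * T + 1)"
          unfolding c_def by algebra
        also have "\<dots> = N * (- (B * (q1 - q2) - (A - B) * q2) + (A - B))" unfolding q1 q2 NT by algebra
        finally show ?thesis .
      qed
      then show "N dvd (- B - c * (T + 1))" by simp
      have "A - c * T = N * (A * (q1 - q2) - (A - B) * q1 + (A - B))"
      proof -
        have "A - c * T = (A * ((T + 1 - j * A) - (T - j * B)) - (A - B) * (T + 1 - j * A)) + (A - B) * (2 * T * T + 2 * T + 1)"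
          unfolding c_def by algebra
        also have "\<dots> = N * (A * (q1 - q2) - (A - B) * q1 + (A - B))" unfolding q1 q2 NT by algebra
        finally show ?thesis .
      qed
      then show "N dvd (A - c * T)" by simp
    qed
  qed
qed

lemma rotK: "inK u v \<Longrightarrow> inK (- v) u"
proof -
  assume "inK u v"
  then obtain m where m: "N dvd (u - m * int a)" "N dvd (v - m * int b)" unfolding inK_def by blast
  have "inK (m * (- int b)) (m * int a)" using rotK_ab by (rule inK_scale)
  then show ?thesis
  proof (rule inK_cong)
    have "- v - m * - int b = - (v - m * int b)" by algebra
    then show "N dvd (- v - m * - int b)" using m(2) by (simp only: dvd_minus_iff)
    show "N dvd (u - m * int a)" by (rule m(1))
  qed
qed

lemma conj_m: "\<exists>m::nat. N dvd (int a + int m * int b) \<and> N dvd (int b - int m * int a)"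
proof -
  obtain k where k: "N dvd (- int b - k * int a)" "N dvd (int a - k * int b)"
    using rotK_ab unfolding inK_def by blast
  define X1 where "X1 = - int b - k * int a"
  define X2 where "X2 = int a - k * int b"
  define m where "m = nat ((k ^ 3) mod N)"
  have mm: "int m = (k ^ 3) mod N" unfolding m_def using Npos by simp
  have dm: "N dvd (k ^ 3 - int m)" unfolding mm by (simp add: mod_eq_dvd_iff[symmetric])
  have e1: "int a + int m * int b = (X2 - k * X1 - k * k * X2) - (k ^ 3 - int m) * int b"
    unfolding X1_def X2_def by algebra
  have e2: "int b - int m * int a = - (X1 + k * X2 - k * k * X1) + (k ^ 3 - int m) * int a"
    unfolding X1_def X2_def by algebra
  have x1: "N dvd X1" "N dvd X2" using k unfolding X1_def X2_def by auto
  have "N dvd ((X2 - k * X1 - k * k * X2) - (k ^ 3 - int m) * int b)"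
    by (rule dvd_diff[OF dvd_diff[OF dvd_diff[OF x1(2) dvd_mult[OF x1(1)]] dvd_mult[OF x1(2)]] dvd_mult2[OF dm]])
  moreover have "N dvd (- (X1 + k * X2 - k * k * X1) + (k ^ 3 - int m) * int a)"
    by (rule dvd_add[OF iffD2[OF dvd_minus_iff dvd_diff[OF dvd_add[OF x1(1) dvd_mult[OF x1(2)]] dvd_mult[OF x1(1)]]] dvd_mult2[OF dm]])
  ultimately show ?thesis using e1 e2 by (intro exI[of _ m]) simp
qed

end


definition pull :: "nat \<Rightarrow> (nat \<times> nat \<Rightarrow> nat \<times> nat) \<Rightarrow> (nat \<times> nat \<Rightarrow> nat) \<Rightarrow> (nat \<times> nat \<Rightarrow> nat)" where
  "pull n h A = (\<lambda>p. if p \<in> zn2 n then A (h p) else 0)"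

definition md :: "nat \<Rightarrow> int \<Rightarrow> nat" where "md n z = nat (z mod int n)"

definition normal :: "nat \<Rightarrow> (nat \<times> nat \<Rightarrow> nat) \<Rightarrow> bool" where
  "normal n A \<longleftrightarrow> (\<forall>p. p \<notin> zn2 n \<longrightarrow> A p = 0)"

lemma pull_normal: "normal n (pull n h A)" unfolding normal_def pull_def by simp

lemma pull_pull: "(\<And>p. p \<in> zn2 n \<Longrightarrow> h p \<in> zn2 n) \<Longrightarrow> pull n h (pull n h' A) = pull n (h' \<circ> h) A"
  unfolding pull_def by (rule ext) auto

lemma pull_cong: "(\<And>p. p \<in> zn2 n \<Longrightarrow> h p = h' p) \<Longrightarrow> pull n h A = pull n h' A"
  unfolding pull_def by (rule ext) auto

lemma pull_id: "normal n A \<Longrightarrow> (\<And>p. p \<in> zn2 n \<Longrightarrow> h p = p) \<Longrightarrow> pull n h A = A"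
  unfolding pull_def normal_def by (rule ext) auto

lemma rot_pull: "rot n A = pull n (\<lambda>(i, j). (n - 1 - j, i)) A"
proof (rule ext)
  fix p show "rot n A p = pull n (\<lambda>(i, j). (n - 1 - j, i)) A p"
    unfolding rot_def pull_def zn2_def by (cases p) simp
qed

lemma tau1_pull: "tau1 n A = pull n (\<lambda>(i, j). ((i + n - 1) mod n, j)) A"
proof (rule ext)
  fix p show "tau1 n A p = pull n (\<lambda>(i, j). ((i + n - 1) mod n, j)) A p"
    unfolding tau1_def pull_def zn2_def by (cases p) simp
qed

lemma tau2_pull: "tau2 n A = pull n (\<lambda>(i, j). (i, (j + n - 1) mod n)) A"
proof (rule ext)
  fix p show "tau2 n A p = pull n (\<lambda>(i, j). (i, (j + n - 1) mod n)) A p"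
    unfolding tau2_def pull_def zn2_def by (cases p) simp
qed

context perf_setup begin

lemma int_md: "int (md n z) = z mod N" unfolding md_def using Npos by simp
lemma md_lt: "md n z < n" unfolding md_def using Npos by (simp add: nat_less_iff)
lemma md_eq_iff: "md n z = md n w \<longleftrightarrow> N dvd (z - w)"
  by (metis int_md mod_eq_dvd_iff of_nat_eq_iff)
lemma md_nat: "v < n \<Longrightarrow> md n (int v) = v" unfolding md_def by simp
lemma md_eq_nat: "v < n \<Longrightarrow> md n z = v \<longleftrightarrow> N dvd (z - int v)"
  using md_eq_iff[of z "int v"] md_nat by metis

lemma zn2I: "i < n \<Longrightarrow> j < n \<Longrightarrow> (i, j) \<in> zn2 n" unfolding zn2_def by simp

lemma tau1_iter: "normal n A \<Longrightarrow> (tau1 n ^^ k) A = pull n (\<lambda>(i, j). (md n (int i - int k), j)) A"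
proof (induction k)
  case 0
  have "pull n (\<lambda>(i, j). (md n (int i - int 0), j)) A = A"
    by (rule pull_id[OF 0]) (auto simp: zn2_iff md_nat)
  then show ?case by simp
next
  case (Suc k)
  have "(tau1 n ^^ Suc k) A = tau1 n ((tau1 n ^^ k) A)" by simp
  also have "\<dots> = tau1 n (pull n (\<lambda>(i, j). (md n (int i - int k), j)) A)"
    using Suc by simp
  also have "\<dots> = pull n (\<lambda>(i, j). ((i + n - 1) mod n, j)) (pull n (\<lambda>(i, j). (md n (int i - int k), j)) A)"
    by (rule tau1_pull)
  also have "\<dots> = pull n ((\<lambda>(i, j). (md n (int i - int k), j)) \<circ> (\<lambda>(i, j). ((i + n - 1) mod n, j))) A"
    by (rule pull_pull) (auto simp: zn2_iff)
  also have "\<dots> = pull n (\<lambda>(i, j). (md n (int i - int (Suc k)), j)) A"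
  proof (rule pull_cong)
    fix p assume "p \<in> zn2 n"
    obtain i j where p: "p = (i, j)" by (cases p)
    have "int ((i + n - 1) mod n) = (int i - 1) mod N"
    proof -
      have h1: "int ((i + n - 1) mod n) = int (i + n - 1) mod N" by (simp add: zmod_int)
      have h2: "int (i + n - 1) = (int i - 1) + N" using n5 by simp
      show ?thesis unfolding h1 h2 by simp
    qed
    then have e: "(int ((i + n - 1) mod n) - int k) - (int i - int (Suc k)) = (int i - 1) mod N - (int i - 1)"
      by simp
    have "N dvd ((int i - 1) mod N - (int i - 1))" by (simp add: mod_eq_dvd_iff[symmetric])
    then have "md n (int ((i + n - 1) mod n) - int k) = md n (int i - int (Suc k))"
      unfolding md_eq_iff e .
    then show "((\<lambda>(i, j). (md n (int i - int k), j)) \<circ> (\<lambda>(i, j). ((i + n - 1) mod n, j))) p =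
          (\<lambda>(i, j). (md n (int i - int (Suc k)), j)) p" unfolding p by simp
  qed
  finally show ?case .
qed

lemma tau2_iter: "normal n A \<Longrightarrow> (tau2 n ^^ k) A = pull n (\<lambda>(i, j). (i, md n (int j - int k))) A"
proof (induction k)
  case 0
  have "pull n (\<lambda>(i, j). (i, md n (int j - int 0))) A = A"
    by (rule pull_id[OF 0]) (auto simp: zn2_iff md_nat)
  then show ?case by simp
next
  case (Suc k)
  have "(tau2 n ^^ Suc k) A = tau2 n ((tau2 n ^^ k) A)" by simp
  also have "\<dots> = tau2 n (pull n (\<lambda>(i, j). (i, md n (int j - int k))) A)"
    using Suc by simp
  also have "\<dots> = pull n (\<lambda>(i, j). (i, (j + n - 1) mod n)) (pull n (\<lambda>(i, j). (i, md n (int j - int k))) A)"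
    by (rule tau2_pull)
  also have "\<dots> = pull n ((\<lambda>(i, j). (i, md n (int j - int k))) \<circ> (\<lambda>(i, j). (i, (j + n - 1) mod n))) A"
    by (rule pull_pull) (auto simp: zn2_iff)
  also have "\<dots> = pull n (\<lambda>(i, j). (i, md n (int j - int (Suc k)))) A"
  proof (rule pull_cong)
    fix p assume "p \<in> zn2 n"
    obtain i j where p: "p = (i, j)" by (cases p)
    have "int ((j + n - 1) mod n) = (int j - 1) mod N"
    proof -
      have h1: "int ((j + n - 1) mod n) = int (j + n - 1) mod N" by (simp add: zmod_int)
      have h2: "int (j + n - 1) = (int j - 1) + N" using n5 by simp
      show ?thesis unfolding h1 h2 by simp
    qed
    then have e: "(int ((j + n - 1) mod n) - int k) - (int j - int (Suc k)) = (int j - 1) mod N - (int j - 1)"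
      by simp
    have "N dvd ((int j - 1) mod N - (int j - 1))" by (simp add: mod_eq_dvd_iff[symmetric])
    then have "md n (int ((j + n - 1) mod n) - int k) = md n (int j - int (Suc k))"
      unfolding md_eq_iff e .
    then show "((\<lambda>(i, j). (i, md n (int j - int k))) \<circ> (\<lambda>(i, j). (i, (j + n - 1) mod n))) p =
          (\<lambda>(i, j). (i, md n (int j - int (Suc k)))) p" unfolding p by simp
  qed
  finally show ?case .
qed

definition psiF :: "nat \<times> nat \<Rightarrow> nat \<times> nat" where
  "psiF p = (md n (int x1 + int x2 - int (snd p)), md n (int (fst p) - int x1 + int x2))"

definition psiG :: "nat \<times> nat \<Rightarrow> nat \<times> nat" where
  "psiG p = (md n (int (fst p) - int a), md n (int (snd p) - int b))"

definition FF where "FF = tau2 n ^^ nat ((int x1 + int x2 + 1) mod int n) \<circ> tau1 n ^^ nat ((int x1 - int x2) mod int n) \<circ> rot n"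
definition GG where "GG = tau1 n ^^ a \<circ> tau2 n ^^ b"

lemma psiF_zn2: "psiF p \<in> zn2 n" unfolding psiF_def zn2_iff using md_lt by simp
lemma psiG_zn2: "psiG p \<in> zn2 n" unfolding psiG_def zn2_iff using md_lt by simp

lemma FF_pull: "FF A = pull n psiF A"
proof -
  define al where "al = nat ((int x1 + int x2 + 1) mod int n)"
  define be where "be = nat ((int x1 - int x2) mod int n)"
  have ial: "int al = (int x1 + int x2 + 1) mod N" unfolding al_def using Npos by simp
  have ibe: "int be = (int x1 - int x2) mod N" unfolding be_def using Npos by simp
  have s0: "FF A = (tau2 n ^^ al) ((tau1 n ^^ be) (rot n A))" unfolding FF_def al_def be_def by simp
  have s1: "(tau1 n ^^ be) (rot n A) = pull n (\<lambda>(i, j). (md n (int i - int be), j)) (pull n (\<lambda>(i, j). (n - 1 - j, i)) A)"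
    unfolding rot_pull by (rule tau1_iter[OF pull_normal])
  have s2: "pull n (\<lambda>(i, j). (md n (int i - int be), j)) (pull n (\<lambda>(i, j). (n - 1 - j, i)) A) = pull n ((\<lambda>(i, j). (n - 1 - j, i)) \<circ> (\<lambda>(i, j). (md n (int i - int be), j))) A"
    by (rule pull_pull) (auto simp: zn2_iff md_lt)
  have s3: "(tau2 n ^^ al) (pull n ((\<lambda>(i, j). (n - 1 - j, i)) \<circ> (\<lambda>(i, j). (md n (int i - int be), j))) A) = pull n (\<lambda>(i, j). (i, md n (int j - int al))) (pull n ((\<lambda>(i, j). (n - 1 - j, i)) \<circ> (\<lambda>(i, j). (md n (int i - int be), j))) A)"
    by (rule tau2_iter[OF pull_normal])
  have s4: "pull n (\<lambda>(i, j). (i, md n (int j - int al))) (pull n ((\<lambda>(i, j). (n - 1 - j, i)) \<circ> (\<lambda>(i, j). (md n (int i - int be), j))) A) = pull n (((\<lambda>(i, j). (n - 1 - j, i)) \<circ> (\<lambda>(i, j). (md n (int i - int be), j))) \<circ> (\<lambda>(i, j). (i, md n (int j - int al)))) A"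
    by (rule pull_pull) (auto simp: zn2_iff md_lt)
  have "FF A = pull n (((\<lambda>(i, j). (n - 1 - j, i)) \<circ> (\<lambda>(i, j). (md n (int i - int be), j))) \<circ> (\<lambda>(i, j). (i, md n (int j - int al)))) A"
    by (simp only: s0 s1 s2 s3 s4)
  also have "\<dots> = pull n psiF A"
  proof (rule pull_cong)
    fix p assume "p \<in> zn2 n"
    obtain i j where p: "p = (i, j)" by (cases p)
    have c1: "n - 1 - md n (int j - int al) = md n (int x1 + int x2 - int j)"
    proof -
      have lt: "md n (int j - int al) < n" by (rule md_lt)
      have "int (n - 1 - md n (int j - int al)) = N - 1 - (int j - int al) mod N"
        using lt int_md by simp
      moreover have "N dvd ((N - 1 - (int j - int al) mod N) - (int x1 + int x2 - int j))"
      proof -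
        have h1: "N dvd ((int j - int al) mod N - (int j - int al))" by (simp add: mod_eq_dvd_iff[symmetric])
        have h2: "N dvd (int al - (int x1 + int x2 + 1))" unfolding ial by (simp add: mod_eq_dvd_iff[symmetric])
        have e: "(N - 1 - (int j - int al) mod N) - (int x1 + int x2 - int j) =
               N - ((int j - int al) mod N - (int j - int al)) + (int al - (int x1 + int x2 + 1))" by algebra
        show ?thesis unfolding e by (rule dvd_add[OF dvd_diff[OF dvd_refl h1] h2])
      qed
      ultimately have h: "N dvd (int (n - 1 - md n (int j - int al)) - (int x1 + int x2 - int j))" by simp
      have lt2: "n - 1 - md n (int j - int al) < n" using n5 by simp
      have "N dvd ((int x1 + int x2 - int j) - int (n - 1 - md n (int j - int al)))"
        by (subst dvd_diff_commute) (rule h)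
      then have "md n (int x1 + int x2 - int j) = n - 1 - md n (int j - int al)"
        using md_eq_nat[OF lt2] by blast
      then show ?thesis by simp
    qed
    have c2: "md n (int i - int be) = md n (int i - int x1 + int x2)"
      unfolding md_eq_iff
    proof -
      have "N dvd (int be - (int x1 - int x2))" unfolding ibe by (simp add: mod_eq_dvd_iff[symmetric])
      moreover have e: "int i - int be - (int i - int x1 + int x2) = - (int be - (int x1 - int x2))" by algebra
      ultimately show "N dvd (int i - int be - (int i - int x1 + int x2))" unfolding e by (simp only: dvd_minus_iff)
    qed
    show "(((\<lambda>(i, j). (n - 1 - j, i)) \<circ> (\<lambda>(i, j). (md n (int i - int be), j))) \<circ> (\<lambda>(i, j). (i, md n (int j - int al)))) p = psiF p"
      unfolding p psiF_def using c1 c2 by simp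
  qed
  finally show ?thesis .
qed

lemma GG_pull: "normal n A \<Longrightarrow> GG A = pull n psiG A"
proof -
  assume A: "normal n A"
  have s0: "GG A = (tau1 n ^^ a) ((tau2 n ^^ b) A)" unfolding GG_def by simp
  have s1: "(tau2 n ^^ b) A = pull n (\<lambda>(i, j). (i, md n (int j - int b))) A" by (rule tau2_iter[OF A])
  have s2: "(tau1 n ^^ a) (pull n (\<lambda>(i, j). (i, md n (int j - int b))) A) = pull n (\<lambda>(i, j). (md n (int i - int a), j)) (pull n (\<lambda>(i, j). (i, md n (int j - int b))) A)"
    by (rule tau1_iter[OF pull_normal])
  have s3: "pull n (\<lambda>(i, j). (md n (int i - int a), j)) (pull n (\<lambda>(i, j). (i, md n (int j - int b))) A) = pull n ((\<lambda>(i, j). (i, md n (int j - int b))) \<circ> (\<lambda>(i, j). (md n (int i - int a), j))) A"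
    by (rule pull_pull) (auto simp: zn2_iff md_lt)
  have "GG A = pull n ((\<lambda>(i, j). (i, md n (int j - int b))) \<circ> (\<lambda>(i, j). (md n (int i - int a), j))) A"
    by (simp only: s0 s1 s2 s3)
  also have "\<dots> = pull n psiG A"
    by (rule pull_cong) (auto simp: psiG_def)
  finally show ?thesis .
qed

end


lemma fg_iter:
  assumes gP: "\<And>y. y \<in> P \<Longrightarrow> g y \<in> P" and fg: "\<And>y. y \<in> P \<Longrightarrow> f (g y) = (g ^^ m) (f y)"
  shows "y \<in> P \<Longrightarrow> f ((g ^^ i) y) = (g ^^ (m * i)) (f y)"
proof (induction i)
  case 0 then show ?case by simp
next
  case (Suc i)
  have giP: "(g ^^ i) y \<in> P" using Suc.prems by (induction i) (auto intro: gP)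
  have "f ((g ^^ Suc i) y) = f (g ((g ^^ i) y))" by simp
  also have "\<dots> = (g ^^ m) (f ((g ^^ i) y))" using fg giP by blast
  also have "\<dots> = (g ^^ m) ((g ^^ (m * i)) (f y))" using Suc by simp
  also have "\<dots> = (g ^^ (m * Suc i)) (f y)" by (simp add: funpow_add)
  finally show ?case .
qed

context perf_setup begin

abbreviation "CC \<equiv> translate_code n (x1, x2) (lin_code n a b)"
abbreviation "SS \<equiv> perfect_sudoku_grids n t CC"
abbreviation "RR \<equiv> relabel_rel n SS"
abbreviation "PAL \<equiv> palette n t CC"

lemma md_cong: "N dvd (int (md n z) - z)"
  using int_md by (simp add: mod_eq_dvd_iff[symmetric])

lemma lw_md: "lw (int (md n z) - int (md n w)) = lw (z - w)"
proof (rule lw_cong)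
  have e: "int (md n z) - int (md n w) - (z - w) = (int (md n z) - z) - (int (md n w) - w)" by algebra
  show "N dvd (int (md n z) - int (md n w) - (z - w))" unfolding e by (rule dvd_diff[OF md_cong md_cong])
qed

lemma nat_eq_dvd: "j < n \<Longrightarrow> j' < n \<Longrightarrow> N dvd (int j - int j') \<Longrightarrow> j = j'"
  using dvd_small[of "int j - int j'"] by simp

lemma memC: "c \<in> CC \<longleftrightarrow> c \<in> zn2 n \<and> inK (int (fst c) - int x1) (int (snd c) - int x2)"
proof
  assume "c \<in> CC"
  then obtain c0 where c0: "c0 \<in> lin_code n a b" and c: "c = ((x1 + fst c0) mod n, (x2 + snd c0) mod n)"
    unfolding translate_code_def by auto
  have z: "c \<in> zn2 n" unfolding c zn2_iff using n5 by simp
  have k: "inK (int (fst c0)) (int (snd c0))" by (rule C0_inK[OF c0])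
  have "inK (int (fst c) - int x1) (int (snd c) - int x2)"
  proof (rule inK_cong[OF k])
    have e: "int (fst c) - int x1 - int (fst c0) = (int x1 + int (fst c0)) mod N - (int x1 + int (fst c0))"
      unfolding c by (simp add: zmod_int)
    show "N dvd (int (fst c) - int x1 - int (fst c0))" unfolding e by (simp add: mod_eq_dvd_iff[symmetric])
    have e2: "int (snd c) - int x2 - int (snd c0) = (int x2 + int (snd c0)) mod N - (int x2 + int (snd c0))"
      unfolding c by (simp add: zmod_int)
    show "N dvd (int (snd c) - int x2 - int (snd c0))" unfolding e2 by (simp add: mod_eq_dvd_iff[symmetric])
  qed
  then show "c \<in> zn2 n \<and> inK (int (fst c) - int x1) (int (snd c) - int x2)" using z by blast
next
  assume h: "c \<in> zn2 n \<and> inK (int (fst c) - int x1) (int (snd c) - int x2)"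
  define u where "u = int (fst c) - int x1"
  define v where "v = int (snd c) - int x2"
  have c0: "(nat (u mod N), nat (v mod N)) \<in> lin_code n a b" using inK_C0 h unfolding u_def v_def by blast
  have um: "int (nat (u mod N)) = u mod N" "int (nat (v mod N)) = v mod N" using Npos by auto
  have cn: "fst c < n" "snd c < n" using h zn2_iff by auto
  have "int ((x1 + nat (u mod N)) mod n) = int (fst c)"
  proof -
    have "int ((x1 + nat (u mod N)) mod n) = (int x1 + u mod N) mod N" using um by (simp add: zmod_int)
    also have "\<dots> = (int x1 + u) mod N" by (simp add: mod_add_right_eq)
    also have "\<dots> = int (fst c)" unfolding u_def using cn by simp
    finally show ?thesis .
  qed
  moreover have "int ((x2 + nat (v mod N)) mod n) = int (snd c)"
  proof -
    have "int ((x2 + nat (v mod N)) mod n) = (int x2 + v mod N) mod N" using um by (simp add: zmod_int)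
    also have "\<dots> = (int x2 + v) mod N" by (simp add: mod_add_right_eq)
    also have "\<dots> = int (snd c)" unfolding v_def using cn by simp
    finally show ?thesis .
  qed
  ultimately have "c = ((x1 + fst (nat (u mod N), nat (v mod N))) mod n, (x2 + snd (nat (u mod N), nat (v mod N))) mod n)"
    by (simp add: prod_eq_iff)
  then show "c \<in> CC" unfolding translate_code_def using c0 by force
qed

lemma CC_zn2: "c \<in> CC \<Longrightarrow> c \<in> zn2 n" using memC by blast

lemma CC_img: "CC = (\<lambda>k. (md n (int x1 + int k * int a), md n (int x2 + int k * int b))) ` {0..<n}"
proof
  show "CC \<subseteq> (\<lambda>k. (md n (int x1 + int k * int a), md n (int x2 + int k * int b))) ` {0..<n}"
  proof
    fix c assume "c \<in> CC"
    then have z: "c \<in> zn2 n" and k: "inK (int (fst c) - int x1) (int (snd c) - int x2)" using memC by auto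
    obtain k where k: "N dvd (int (fst c) - int x1 - k * int a)" "N dvd (int (snd c) - int x2 - k * int b)"
      using k unfolding inK_def by blast
    define k' where "k' = nat (k mod N)"
    have k'n: "k' < n" unfolding k'_def using Npos by (simp add: nat_less_iff)
    have kk: "N dvd (int k' - k)" unfolding k'_def using Npos by (simp add: mod_eq_dvd_iff[symmetric])
    have "md n (int x1 + int k' * int a) = fst c"
    proof -
      have e: "int x1 + int k' * int a - int (fst c) = (int k' - k) * int a - (int (fst c) - int x1 - k * int a)" by algebra
      have "N dvd (int x1 + int k' * int a - int (fst c))" unfolding e by (rule dvd_diff[OF dvd_mult2[OF kk] k(1)])
      then show ?thesis using md_eq_nat z zn2_iff by blast
    qed
    moreover have "md n (int x2 + int k' * int b) = snd c"
    proof -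
      have e: "int x2 + int k' * int b - int (snd c) = (int k' - k) * int b - (int (snd c) - int x2 - k * int b)" by algebra
      have "N dvd (int x2 + int k' * int b - int (snd c))" unfolding e by (rule dvd_diff[OF dvd_mult2[OF kk] k(2)])
      then show ?thesis using md_eq_nat z zn2_iff by blast
    qed
    ultimately show "c \<in> (\<lambda>k. (md n (int x1 + int k * int a), md n (int x2 + int k * int b))) ` {0..<n}"
      using k'n by (intro image_eqI[of _ _ k']) (auto simp: prod_eq_iff)
  qed
  show "(\<lambda>k. (md n (int x1 + int k * int a), md n (int x2 + int k * int b))) ` {0..<n} \<subseteq> CC"
  proof
    fix c assume "c \<in> (\<lambda>k. (md n (int x1 + int k * int a), md n (int x2 + int k * int b))) ` {0..<n}"
    then obtain k where c: "c = (md n (int x1 + int k * int a), md n (int x2 + int k * int b))" by auto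
    have z: "c \<in> zn2 n" unfolding c zn2_iff using md_lt by simp
    have "inK (int (fst c) - int x1) (int (snd c) - int x2)" unfolding inK_def
    proof (intro exI[of _ "int k"] conjI)
      have e: "int (fst c) - int x1 - int k * int a = int (md n (int x1 + int k * int a)) - (int x1 + int k * int a)"
        unfolding c by simp
      show "N dvd (int (fst c) - int x1 - int k * int a)" unfolding e by (rule md_cong)
      have e2: "int (snd c) - int x2 - int k * int b = int (md n (int x2 + int k * int b)) - (int x2 + int k * int b)"
        unfolding c by simp
      show "N dvd (int (snd c) - int x2 - int k * int b)" unfolding e2 by (rule md_cong)
    qed
    then show "c \<in> CC" using memC z by blast
  qed
qed

lemma card_CC: "card CC = n"
proof -
  have "inj_on (\<lambda>k. (md n (int x1 + int k * int a), md n (int x2 + int k * int b))) {0..<n}"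
  proof (rule inj_onI)
    fix k k' assume k: "k \<in> {0..<n}" "k' \<in> {0..<n}"
      and e: "(md n (int x1 + int k * int a), md n (int x2 + int k * int b)) = (md n (int x1 + int k' * int a), md n (int x2 + int k' * int b))"
    have "N dvd ((int x1 + int k * int a) - (int x1 + int k' * int a))" using e md_eq_iff by simp
    moreover have "(int x1 + int k * int a) - (int x1 + int k' * int a) = (int k - int k') * int a" by algebra
    ultimately have da: "N dvd ((int k - int k') * int a)" by simp
    have "N dvd ((int x2 + int k * int b) - (int x2 + int k' * int b))" using e md_eq_iff by simp
    moreover have "(int x2 + int k * int b) - (int x2 + int k' * int b) = (int k - int k') * int b" by algebra
    ultimately have db: "N dvd ((int k - int k') * int b)" by simp
    have "N dvd (int k - int k')" using ord_n[OF da db] .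
    then show "k = k'" using nat_eq_dvd k by auto
  qed
  then show ?thesis unfolding CC_img by (simp add: card_image)
qed

lemma fin_CC: "finite CC" unfolding CC_img by simp

lemma cw_ex1: "p \<in> zn2 n \<Longrightarrow> \<exists>!c. c \<in> CC \<and> lee_dist n p c \<le> t"
proof -
  assume p: "p \<in> zn2 n"
  obtain u v where uv: "inK u v" and lu: "lw ((int (fst p) - int x1) - u) + lw ((int (snd p) - int x2) - v) \<le> int rr"
    using cover_int by blast
  define c where "c = (md n (int x1 + u), md n (int x2 + v))"
  have cz: "c \<in> zn2 n" unfolding c_def zn2_iff using md_lt by simp
  have cK: "inK (int (fst c) - int x1) (int (snd c) - int x2)"
  proof (rule inK_cong[OF uv])
    have e: "int (fst c) - int x1 - u = int (md n (int x1 + u)) - (int x1 + u)" unfolding c_def by simp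
    show "N dvd (int (fst c) - int x1 - u)" unfolding e by (rule md_cong)
    have e2: "int (snd c) - int x2 - v = int (md n (int x2 + v)) - (int x2 + v)" unfolding c_def by simp
    show "N dvd (int (snd c) - int x2 - v)" unfolding e2 by (rule md_cong)
  qed
  have cC: "c \<in> CC" using memC cz cK by blast
  have "int (lee_dist n p c) = lw (int (fst p) - int (fst c)) + lw (int (snd p) - int (snd c))"
    by (rule lee_dist_int[OF p cz])
  also have "lw (int (fst p) - int (fst c)) = lw ((int (fst p) - int x1) - u)"
  proof (rule lw_cong)
    have e: "int (fst p) - int (fst c) - (int (fst p) - int x1 - u) = - (int (md n (int x1 + u)) - (int x1 + u))"
      unfolding c_def by simp
    show "N dvd (int (fst p) - int (fst c) - (int (fst p) - int x1 - u))" unfolding e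
      using md_cong by (simp only: dvd_minus_iff)
  qed
  also have "lw (int (snd p) - int (snd c)) = lw ((int (snd p) - int x2) - v)"
  proof (rule lw_cong)
    have e: "int (snd p) - int (snd c) - (int (snd p) - int x2 - v) = - (int (md n (int x2 + v)) - (int x2 + v))"
      unfolding c_def by simp
    show "N dvd (int (snd p) - int (snd c) - (int (snd p) - int x2 - v))" unfolding e
      using md_cong by (simp only: dvd_minus_iff)
  qed
  finally have "int (lee_dist n p c) \<le> int t" using lu rr_eq by simp
  then have ex: "c \<in> CC \<and> lee_dist n p c \<le> t" using cC by simp
  have uq: "c1 = c2" if c1: "c1 \<in> CC" "lee_dist n p c1 \<le> t" and c2: "c2 \<in> CC" "lee_dist n p c2 \<le> t" for c1 c2
  proof -
    have z1: "c1 \<in> zn2 n" and k1: "inK (int (fst c1) - int x1) (int (snd c1) - int x2)" using memC c1 by auto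
    have z2: "c2 \<in> zn2 n" and k2: "inK (int (fst c2) - int x1) (int (snd c2) - int x2)" using memC c2 by auto
    have K: "inK (int (fst c1) - int (fst c2)) (int (snd c1) - int (snd c2))"
      using inK_diff[OF k1 k2] by simp
    have d1: "lw (int (fst p) - int (fst c1)) + lw (int (snd p) - int (snd c1)) \<le> int t"
      using lee_dist_int[OF p z1] c1(2) by linarith
    have d2: "lw (int (fst p) - int (fst c2)) + lw (int (snd p) - int (snd c2)) \<le> int t"
      using lee_dist_int[OF p z2] c2(2) by linarith
    have tr1: "lw (int (fst c1) - int (fst c2)) \<le> lw (int (fst p) - int (fst c1)) + lw (int (fst p) - int (fst c2))"
      using lw_tri[of "int (fst c1) - int (fst p)" "int (fst p) - int (fst c2)"] lw_sym[of "int (fst c1)" "int (fst p)"]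
      by simp
    have tr2: "lw (int (snd c1) - int (snd c2)) \<le> lw (int (snd p) - int (snd c1)) + lw (int (snd p) - int (snd c2))"
      using lw_tri[of "int (snd c1) - int (snd p)" "int (snd p) - int (snd c2)"] lw_sym[of "int (snd c1)" "int (snd p)"]
      by simp
    have dv: "N dvd (int (fst c1) - int (fst c2)) \<and> N dvd (int (snd c1) - int (snd c2))"
    proof (rule ccontr)
      assume "\<not> ?thesis"
      then have "int dd \<le> lw (int (fst c1) - int (fst c2)) + lw (int (snd c1) - int (snd c2))"
        using dmin_int[OF K] by blast
      then show False using tr1 tr2 d1 d2 dd_ge by linarith
    qed
    then show "c1 = c2" using nat_eq_dvd z1 z2 zn2_iff by (metis prod_eq_iff)
  qed
  show "\<exists>!c. c \<in> CC \<and> lee_dist n p c \<le> t" using ex uq by blast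
qed

definition cw where "cw p = (THE c. c \<in> CC \<and> lee_dist n p c \<le> t)"

lemma cw_spec: "p \<in> zn2 n \<Longrightarrow> cw p \<in> CC \<and> lee_dist n p (cw p) \<le> t"
  unfolding cw_def by (rule theI'[OF cw_ex1])

lemma cw_unique: "p \<in> zn2 n \<Longrightarrow> c \<in> CC \<Longrightarrow> lee_dist n p c \<le> t \<Longrightarrow> c = cw p"
  using cw_ex1 cw_spec by blast

abbreviation "LL \<equiv> sorted_list_of_set CC"

lemma LL: "distinct LL" "set LL = CC" "length LL = n"
  using fin_CC card_CC by auto

lemma pal_spec: "p \<in> zn2 n \<Longrightarrow> PAL p \<in> {1..n} \<and> LL ! (PAL p - 1) = cw p"
proof -
  assume p: "p \<in> zn2 n"
  have ex1: "\<exists>!i. i \<in> {1..n} \<and> p \<in> lee_ball n t (LL ! (i - 1))"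
  proof -
    have "cw p \<in> set LL" using cw_spec[OF p] LL by simp
    then obtain idx where idx: "idx < length LL" "LL ! idx = cw p" by (auto simp: in_set_conv_nth)
    have ex: "Suc idx \<in> {1..n} \<and> p \<in> lee_ball n t (LL ! (Suc idx - 1))"
      using idx LL cw_spec[OF p] p unfolding lee_ball_def by simp
    have uq: "i = i'" if i: "i \<in> {1..n}" "p \<in> lee_ball n t (LL ! (i - 1))"
      and i': "i' \<in> {1..n}" "p \<in> lee_ball n t (LL ! (i' - 1))" for i i'
    proof -
      have m1: "LL ! (i - 1) \<in> CC" using i LL by (metis nth_mem One_nat_def Suc_pred atLeastAtMost_iff le_simps(3) less_Suc_eq_le)
      have m2: "LL ! (i' - 1) \<in> CC" using i' LL by (metis nth_mem One_nat_def Suc_pred atLeastAtMost_iff le_simps(3) less_Suc_eq_le)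
      have "LL ! (i - 1) = cw p" using cw_unique[OF p m1] i(2) unfolding lee_ball_def by simp
      moreover have "LL ! (i' - 1) = cw p" using cw_unique[OF p m2] i'(2) unfolding lee_ball_def by simp
      ultimately have "LL ! (i - 1) = LL ! (i' - 1)" by simp
      moreover have "i - 1 < length LL" "i' - 1 < length LL" using i i' LL(3) by auto
      ultimately have "i - 1 = i' - 1" using nth_eq_iff_index_eq[OF LL(1)] by blast
      moreover have "1 \<le> i" "1 \<le> i'" using i i' by auto
      ultimately show "i = i'" by arith
    qed
    show ?thesis using ex uq by blast
  qed
  have "PAL p = (THE i. i \<in> {1..n} \<and> p \<in> lee_ball n t (LL ! (i - 1)))"
    unfolding palette_def using p by simp
  then have h: "PAL p \<in> {1..n} \<and> p \<in> lee_ball n t (LL ! (PAL p - 1))"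
    using theI'[OF ex1] by simp
  then have "LL ! (PAL p - 1) \<in> CC" using LL
    by (metis nth_mem One_nat_def Suc_pred atLeastAtMost_iff le_simps(3) less_Suc_eq_le)
  then have "LL ! (PAL p - 1) = cw p" using cw_unique[OF p] h unfolding lee_ball_def by simp
  then show ?thesis using h by simp
qed

lemma pal_eq: "p \<in> zn2 n \<Longrightarrow> q \<in> zn2 n \<Longrightarrow> PAL p = PAL q \<longleftrightarrow> cw p = cw q"
proof
  assume p: "p \<in> zn2 n" and q: "q \<in> zn2 n"
  show "PAL p = PAL q \<Longrightarrow> cw p = cw q" using pal_spec[OF p] pal_spec[OF q] by metis
  assume e: "cw p = cw q"
  have "LL ! (PAL p - 1) = LL ! (PAL q - 1)" using pal_spec[OF p] pal_spec[OF q] e by simp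
  moreover have "PAL p - 1 < length LL" "PAL q - 1 < length LL"
    using pal_spec[OF p] pal_spec[OF q] LL(3) by auto
  ultimately have "PAL p - 1 = PAL q - 1" using nth_eq_iff_index_eq[OF LL(1)] by blast
  moreover have "1 \<le> PAL p" "1 \<le> PAL q" using pal_spec[OF p] pal_spec[OF q] by auto
  ultimately show "PAL p = PAL q" by arith
qed

lemma pal_compat:
  assumes hz: "\<And>p. h p \<in> zn2 n"
    and iso: "\<And>p q. p \<in> zn2 n \<Longrightarrow> q \<in> zn2 n \<Longrightarrow> lee_dist n (h p) (h q) = lee_dist n p q"
    and hC: "\<And>c. c \<in> CC \<Longrightarrow> h c \<in> CC"
    and p: "p \<in> zn2 n" and q: "q \<in> zn2 n" and e: "PAL p = PAL q"
  shows "PAL (h p) = PAL (h q)"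
proof -
  have cwh: "cw (h r) = h (cw r)" if r: "r \<in> zn2 n" for r
  proof -
    have "h (cw r) \<in> CC" using hC cw_spec[OF r] by blast
    moreover have "lee_dist n (h r) (h (cw r)) \<le> t" using iso[OF r CC_zn2] cw_spec[OF r] by simp
    ultimately show ?thesis using cw_unique[OF hz] by metis
  qed
  have "cw p = cw q" using pal_eq[OF p q] e by simp
  then have "cw (h p) = cw (h q)" using cwh p q by simp
  then show ?thesis using pal_eq[OF hz hz] by simp
qed

lemma orth_pull:
  assumes hz: "\<And>p. h p \<in> zn2 n"
    and iso: "\<And>p q. p \<in> zn2 n \<Longrightarrow> q \<in> zn2 n \<Longrightarrow> lee_dist n (h p) (h q) = lee_dist n p q"
    and hC: "\<And>c. c \<in> CC \<Longrightarrow> h c \<in> CC"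
    and hinj: "inj_on h (zn2 n)"
    and o: "orthogonal n S PAL"
  shows "orthogonal n (pull n h S) PAL"
  unfolding orthogonal_def
proof (rule inj_onI)
  fix p q assume p: "p \<in> zn2 n" and q: "q \<in> zn2 n"
    and e: "(pull n h S p, PAL p) = (pull n h S q, PAL q)"
  have "S (h p) = S (h q)" using e p q unfolding pull_def by simp
  moreover have "PAL (h p) = PAL (h q)" using pal_compat[OF hz iso hC p q] e by simp
  ultimately have "h p = h q" using o hz unfolding orthogonal_def inj_on_def by blast
  then show "p = q" using hinj p q unfolding inj_on_def by blast
qed

end


context perf_setup begin

lemma md_diff_inj: "md n z = md n w \<Longrightarrow> z - w = int j - int j' \<Longrightarrow> j < n \<Longrightarrow> j' < n \<Longrightarrow> j = j'"
  using md_eq_iff nat_eq_dvd by metis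

lemma psiF_iso: "p \<in> zn2 n \<Longrightarrow> q \<in> zn2 n \<Longrightarrow> lee_dist n (psiF p) (psiF q) = lee_dist n p q"
proof -
  assume p: "p \<in> zn2 n" and q: "q \<in> zn2 n"
  have "int (lee_dist n (psiF p) (psiF q)) =
     lw (int (md n (int x1 + int x2 - int (snd p))) - int (md n (int x1 + int x2 - int (snd q)))) +
     lw (int (md n (int (fst p) - int x1 + int x2)) - int (md n (int (fst q) - int x1 + int x2)))"
    using lee_dist_int[OF psiF_zn2 psiF_zn2] unfolding psiF_def by simp
  also have "\<dots> = lw ((int x1 + int x2 - int (snd p)) - (int x1 + int x2 - int (snd q))) +
     lw ((int (fst p) - int x1 + int x2) - (int (fst q) - int x1 + int x2))" by (simp only: lw_md)
  also have "(int x1 + int x2 - int (snd p)) - (int x1 + int x2 - int (snd q)) = int (snd q) - int (snd p)" by algebra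
  also have "(int (fst p) - int x1 + int x2) - (int (fst q) - int x1 + int x2) = int (fst p) - int (fst q)" by algebra
  also have "lw (int (snd q) - int (snd p)) = lw (int (snd p) - int (snd q))" by (rule lw_sym)
  also have "lw (int (snd p) - int (snd q)) + lw (int (fst p) - int (fst q)) = int (lee_dist n p q)"
    using lee_dist_int[OF p q] by simp
  finally show ?thesis by simp
qed

lemma psiG_iso: "p \<in> zn2 n \<Longrightarrow> q \<in> zn2 n \<Longrightarrow> lee_dist n (psiG p) (psiG q) = lee_dist n p q"
proof -
  assume p: "p \<in> zn2 n" and q: "q \<in> zn2 n"
  have "int (lee_dist n (psiG p) (psiG q)) =
     lw (int (md n (int (fst p) - int a)) - int (md n (int (fst q) - int a))) +
     lw (int (md n (int (snd p) - int b)) - int (md n (int (snd q) - int b)))"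
    using lee_dist_int[OF psiG_zn2 psiG_zn2] unfolding psiG_def by simp
  also have "\<dots> = lw ((int (fst p) - int a) - (int (fst q) - int a)) +
     lw ((int (snd p) - int b) - (int (snd q) - int b))" by (simp only: lw_md)
  also have "(int (fst p) - int a) - (int (fst q) - int a) = int (fst p) - int (fst q)" by algebra
  also have "(int (snd p) - int b) - (int (snd q) - int b) = int (snd p) - int (snd q)" by algebra
  also have "lw (int (fst p) - int (fst q)) + lw (int (snd p) - int (snd q)) = int (lee_dist n p q)"
    using lee_dist_int[OF p q] by simp
  finally show ?thesis by simp
qed

lemma psiF_C: "c \<in> CC \<Longrightarrow> psiF c \<in> CC"
proof -
  assume "c \<in> CC"
  then have k: "inK (int (fst c) - int x1) (int (snd c) - int x2)" using memC by blast
  have k2: "inK (- (int (snd c) - int x2)) (int (fst c) - int x1)" using rotK[OF k] .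
  have "inK (int (fst (psiF c)) - int x1) (int (snd (psiF c)) - int x2)"
  proof (rule inK_cong[OF k2])
    have e: "int (fst (psiF c)) - int x1 - - (int (snd c) - int x2) =
        int (md n (int x1 + int x2 - int (snd c))) - (int x1 + int x2 - int (snd c))"
      unfolding psiF_def by simp
    show "N dvd (int (fst (psiF c)) - int x1 - - (int (snd c) - int x2))" unfolding e by (rule md_cong)
    have e2: "int (snd (psiF c)) - int x2 - (int (fst c) - int x1) =
        int (md n (int (fst c) - int x1 + int x2)) - (int (fst c) - int x1 + int x2)"
      unfolding psiF_def by simp
    show "N dvd (int (snd (psiF c)) - int x2 - (int (fst c) - int x1))" unfolding e2 by (rule md_cong)
  qed
  then show ?thesis using memC psiF_zn2 by blast
qed

lemma psiG_C: "c \<in> CC \<Longrightarrow> psiG c \<in> CC"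
proof -
  assume "c \<in> CC"
  then have k: "inK (int (fst c) - int x1) (int (snd c) - int x2)" using memC by blast
  have k2: "inK ((int (fst c) - int x1) - int a) ((int (snd c) - int x2) - int b)" using inK_diff[OF k inK_ab] .
  have "inK (int (fst (psiG c)) - int x1) (int (snd (psiG c)) - int x2)"
  proof (rule inK_cong[OF k2])
    have e: "int (fst (psiG c)) - int x1 - (int (fst c) - int x1 - int a) =
        int (md n (int (fst c) - int a)) - (int (fst c) - int a)"
      unfolding psiG_def by simp
    show "N dvd (int (fst (psiG c)) - int x1 - (int (fst c) - int x1 - int a))" unfolding e by (rule md_cong)
    have e2: "int (snd (psiG c)) - int x2 - (int (snd c) - int x2 - int b) =
        int (md n (int (snd c) - int b)) - (int (snd c) - int b)"
      unfolding psiG_def by simp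
    show "N dvd (int (snd (psiG c)) - int x2 - (int (snd c) - int x2 - int b))" unfolding e2 by (rule md_cong)
  qed
  then show ?thesis using memC psiG_zn2 by blast
qed

lemma psiF_inj: "inj_on psiF (zn2 n)"
proof (rule inj_onI)
  fix p q assume p: "p \<in> zn2 n" and q: "q \<in> zn2 n" and e: "psiF p = psiF q"
  have e1: "md n (int x1 + int x2 - int (snd p)) = md n (int x1 + int x2 - int (snd q))" using e unfolding psiF_def by simp
  have e2: "md n (int (fst p) - int x1 + int x2) = md n (int (fst q) - int x1 + int x2)" using e unfolding psiF_def by simp
  have "snd q = snd p" by (rule md_diff_inj[OF e1]) (use p q zn2_iff in auto)
  moreover have "fst p = fst q" by (rule md_diff_inj[OF e2]) (use p q zn2_iff in auto)
  ultimately show "p = q" by (simp add: prod_eq_iff)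
qed

lemma psiG_inj: "inj_on psiG (zn2 n)"
proof (rule inj_onI)
  fix p q assume p: "p \<in> zn2 n" and q: "q \<in> zn2 n" and e: "psiG p = psiG q"
  have e1: "md n (int (fst p) - int a) = md n (int (fst q) - int a)" using e unfolding psiG_def by simp
  have e2: "md n (int (snd p) - int b) = md n (int (snd q) - int b)" using e unfolding psiG_def by simp
  have "fst p = fst q" by (rule md_diff_inj[OF e1]) (use p q zn2_iff in auto)
  moreover have "snd p = snd q" by (rule md_diff_inj[OF e2]) (use p q zn2_iff in auto)
  ultimately show "p = q" by (simp add: prod_eq_iff)
qed

lemma latin_F: "latin_square n S \<Longrightarrow> latin_square n (pull n psiF S)"
proof -
  assume L: "latin_square n S"
  have v: "\<forall>p\<in>zn2 n. S p \<in> {1..n}" and r: "\<forall>i<n. inj_on (\<lambda>j. S (i, j)) {0..<n}"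
    and c: "\<forall>j<n. inj_on (\<lambda>i. S (i, j)) {0..<n}" using L unfolding latin_square_def by auto
  show ?thesis unfolding latin_square_def
  proof (intro conjI ballI allI impI)
    fix p assume "p \<in> zn2 n"
    then show "pull n psiF S p \<in> {1..n}" using v psiF_zn2 unfolding pull_def by simp
  next
    fix i assume i: "i < n"
    show "inj_on (\<lambda>j. pull n psiF S (i, j)) {0..<n}"
    proof (rule inj_onI)
      fix j j' assume j: "j \<in> {0..<n}" and j': "j' \<in> {0..<n}" and e: "pull n psiF S (i, j) = pull n psiF S (i, j')"
      have ee: "S (md n (int x1 + int x2 - int j), md n (int i - int x1 + int x2)) = S (md n (int x1 + int x2 - int j'), md n (int i - int x1 + int x2))"
        using e i j j' unfolding pull_def psiF_def zn2_iff by simp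
      have col: "inj_on (\<lambda>i'. S (i', md n (int i - int x1 + int x2))) {0..<n}" using c md_lt by blast
      have "md n (int x1 + int x2 - int j) = md n (int x1 + int x2 - int j')"
        using inj_onD[OF col ee] md_lt by simp
      then show "j = j'" by (rule md_diff_inj[symmetric]) (use j j' in auto)
    qed
  next
    fix j assume j: "j < n"
    show "inj_on (\<lambda>i. pull n psiF S (i, j)) {0..<n}"
    proof (rule inj_onI)
      fix i i' assume i: "i \<in> {0..<n}" and i': "i' \<in> {0..<n}" and e: "pull n psiF S (i, j) = pull n psiF S (i', j)"
      have ee: "S (md n (int x1 + int x2 - int j), md n (int i - int x1 + int x2)) = S (md n (int x1 + int x2 - int j), md n (int i' - int x1 + int x2))"
        using e i i' j unfolding pull_def psiF_def zn2_iff by simp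
      have row: "inj_on (\<lambda>j'. S (md n (int x1 + int x2 - int j), j')) {0..<n}" using r md_lt by blast
      have "md n (int i - int x1 + int x2) = md n (int i' - int x1 + int x2)"
        using inj_onD[OF row ee] md_lt by simp
      then show "i = i'" by (rule md_diff_inj) (use i i' in auto)
    qed
  qed
qed

lemma latin_G: "latin_square n S \<Longrightarrow> latin_square n (pull n psiG S)"
proof -
  assume L: "latin_square n S"
  have v: "\<forall>p\<in>zn2 n. S p \<in> {1..n}" and r: "\<forall>i<n. inj_on (\<lambda>j. S (i, j)) {0..<n}"
    and c: "\<forall>j<n. inj_on (\<lambda>i. S (i, j)) {0..<n}" using L unfolding latin_square_def by auto
  show ?thesis unfolding latin_square_def
  proof (intro conjI ballI allI impI)
    fix p assume "p \<in> zn2 n"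
    then show "pull n psiG S p \<in> {1..n}" using v psiG_zn2 unfolding pull_def by simp
  next
    fix i assume i: "i < n"
    show "inj_on (\<lambda>j. pull n psiG S (i, j)) {0..<n}"
    proof (rule inj_onI)
      fix j j' assume j: "j \<in> {0..<n}" and j': "j' \<in> {0..<n}" and e: "pull n psiG S (i, j) = pull n psiG S (i, j')"
      have ee: "S (md n (int i - int a), md n (int j - int b)) = S (md n (int i - int a), md n (int j' - int b))"
        using e i j j' unfolding pull_def psiG_def zn2_iff by simp
      have row: "inj_on (\<lambda>j'. S (md n (int i - int a), j')) {0..<n}" using r md_lt by blast
      have "md n (int j - int b) = md n (int j' - int b)"
        using inj_onD[OF row ee] md_lt by simp
      then show "j = j'" by (rule md_diff_inj) (use j j' in auto)
    qed
  next
    fix j assume j: "j < n"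
    show "inj_on (\<lambda>i. pull n psiG S (i, j)) {0..<n}"
    proof (rule inj_onI)
      fix i i' assume i: "i \<in> {0..<n}" and i': "i' \<in> {0..<n}" and e: "pull n psiG S (i, j) = pull n psiG S (i', j)"
      have ee: "S (md n (int i - int a), md n (int j - int b)) = S (md n (int i' - int a), md n (int j - int b))"
        using e i i' j unfolding pull_def psiG_def zn2_iff by simp
      have col: "inj_on (\<lambda>i''. S (i'', md n (int j - int b))) {0..<n}" using c md_lt by blast
      have "md n (int i - int a) = md n (int i' - int a)"
        using inj_onD[OF col ee] md_lt by simp
      then show "i = i'" by (rule md_diff_inj) (use i i' in auto)
    qed
  qed
qed

lemma SS_normal: "S \<in> SS \<Longrightarrow> normal n S"
  unfolding perfect_sudoku_grids_def normal_def by simp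

lemma SS_F: "S \<in> SS \<Longrightarrow> FF S \<in> SS"
proof -
  assume S: "S \<in> SS"
  have "latin_square n S" "orthogonal n S PAL" using S unfolding perfect_sudoku_grids_def by auto
  then have "latin_square n (pull n psiF S)" "orthogonal n (pull n psiF S) PAL"
    using latin_F orth_pull[OF psiF_zn2 psiF_iso psiF_C psiF_inj] by auto
  moreover have "\<forall>p. p \<notin> zn2 n \<longrightarrow> pull n psiF S p = 0" unfolding pull_def by simp
  ultimately show ?thesis unfolding FF_pull perfect_sudoku_grids_def by simp
qed

lemma SS_G: "S \<in> SS \<Longrightarrow> GG S \<in> SS"
proof -
  assume S: "S \<in> SS"
  have "latin_square n S" "orthogonal n S PAL" using S unfolding perfect_sudoku_grids_def by auto
  then have "latin_square n (pull n psiG S)" "orthogonal n (pull n psiG S) PAL"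
    using latin_G orth_pull[OF psiG_zn2 psiG_iso psiG_C psiG_inj] by auto
  moreover have "\<forall>p. p \<notin> zn2 n \<longrightarrow> pull n psiG S p = 0" unfolding pull_def by simp
  ultimately have "pull n psiG S \<in> SS" unfolding perfect_sudoku_grids_def by simp
  then show ?thesis using GG_pull[OF SS_normal[OF S]] by simp
qed

lemma RR_equiv: "equiv SS RR"
proof (rule equivI)
  show "RR \<subseteq> SS \<times> SS" unfolding relabel_rel_def by auto
  show "refl_on SS RR"
  proof (rule refl_onI)
    fix S assume "S \<in> SS"
    then show "(S, S) \<in> RR" unfolding relabel_rel_def
      by (auto intro!: exI[of _ id] simp: bij_betw_id)
  qed
  show "sym RR"
  proof (rule symI)
    fix S1 S2 assume "(S1, S2) \<in> RR"
    then obtain \<sigma> where s: "S1 \<in> SS" "S2 \<in> SS" "bij_betw \<sigma> {1..n} {1..n}" "\<forall>p\<in>zn2 n. \<sigma> (S1 p) = S2 p"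
      unfolding relabel_rel_def by auto
    have v: "\<forall>p\<in>zn2 n. S1 p \<in> {1..n}" using s(1) unfolding perfect_sudoku_grids_def latin_square_def by auto
    have "bij_betw (inv_into {1..n} \<sigma>) {1..n} {1..n}" using bij_betw_inv_into[OF s(3)] .
    moreover have "\<forall>p\<in>zn2 n. inv_into {1..n} \<sigma> (S2 p) = S1 p"
    proof
      fix p assume p: "p \<in> zn2 n"
      have "inv_into {1..n} \<sigma> (S2 p) = inv_into {1..n} \<sigma> (\<sigma> (S1 p))" using s(4) p by simp
      also have "\<dots> = S1 p" using inv_into_f_f[OF bij_betw_imp_inj_on[OF s(3)]] v p by simp
      finally show "inv_into {1..n} \<sigma> (S2 p) = S1 p" .
    qed
    ultimately show "(S2, S1) \<in> RR" using s unfolding relabel_rel_def by blast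
  qed
  show "trans RR"
  proof (rule transI)
    fix S1 S2 S3 assume "(S1, S2) \<in> RR" "(S2, S3) \<in> RR"
    then obtain \<sigma> \<tau> where s: "S1 \<in> SS" "S2 \<in> SS" "bij_betw \<sigma> {1..n} {1..n}" "\<forall>p\<in>zn2 n. \<sigma> (S1 p) = S2 p"
      and u: "S3 \<in> SS" "bij_betw \<tau> {1..n} {1..n}" "\<forall>p\<in>zn2 n. \<tau> (S2 p) = S3 p"
      unfolding relabel_rel_def by auto
    have "bij_betw (\<tau> \<circ> \<sigma>) {1..n} {1..n}" using bij_betw_trans[OF s(3) u(2)] .
    moreover have "\<forall>p\<in>zn2 n. (\<tau> \<circ> \<sigma>) (S1 p) = S3 p" using s(4) u(3) by simp
    ultimately show "(S1, S3) \<in> RR" using s u unfolding relabel_rel_def by blast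
  qed
qed

lemma RR_F: "(S1, S2) \<in> RR \<Longrightarrow> (FF S1, FF S2) \<in> RR"
proof -
  assume "(S1, S2) \<in> RR"
  then obtain \<sigma> where s: "S1 \<in> SS" "S2 \<in> SS" "bij_betw \<sigma> {1..n} {1..n}" "\<forall>p\<in>zn2 n. \<sigma> (S1 p) = S2 p"
    unfolding relabel_rel_def by auto
  have "\<forall>p\<in>zn2 n. \<sigma> (FF S1 p) = FF S2 p" using s(4) psiF_zn2 unfolding FF_pull pull_def by simp
  then show ?thesis using s SS_F unfolding relabel_rel_def by blast
qed

lemma RR_G: "(S1, S2) \<in> RR \<Longrightarrow> (GG S1, GG S2) \<in> RR"
proof -
  assume "(S1, S2) \<in> RR"
  then obtain \<sigma> where s: "S1 \<in> SS" "S2 \<in> SS" "bij_betw \<sigma> {1..n} {1..n}" "\<forall>p\<in>zn2 n. \<sigma> (S1 p) = S2 p"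
    unfolding relabel_rel_def by auto
  have "\<forall>p\<in>zn2 n. \<sigma> (GG S1 p) = GG S2 p" using s(4) psiG_zn2
    unfolding GG_pull[OF SS_normal[OF s(1)]] GG_pull[OF SS_normal[OF s(2)]] pull_def by simp
  then show ?thesis using s SS_G unfolding relabel_rel_def by blast
qed

lemma FF_iter: "normal n A \<Longrightarrow> (FF ^^ k) A = pull n (psiF ^^ k) A"
proof (induction k)
  case 0
  have "pull n (psiF ^^ 0) A = A" by (rule pull_id[OF 0]) simp
  then show ?case by (simp add: id_def)
next
  case (Suc k)
  have "(FF ^^ Suc k) A = FF ((FF ^^ k) A)" by simp
  also have "\<dots> = FF (pull n (psiF ^^ k) A)" by (simp only: Suc.IH[OF Suc.prems])
  also have "\<dots> = pull n psiF (pull n (psiF ^^ k) A)" by (rule FF_pull)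
  also have "\<dots> = pull n ((psiF ^^ k) \<circ> psiF) A" by (rule pull_pull) (rule psiF_zn2)
  also have "(psiF ^^ k) \<circ> psiF = psiF ^^ Suc k" by (simp only: funpow_Suc_right)
  finally show ?case .
qed

lemma psiG_pow: "p \<in> zn2 n \<Longrightarrow> (psiG ^^ k) p = (md n (int (fst p) - int k * int a), md n (int (snd p) - int k * int b))"
proof (induction k)
  case 0
  then show ?case using md_nat zn2_iff by (simp add: prod_eq_iff)
next
  case (Suc k)
  have "(psiG ^^ Suc k) p = psiG ((psiG ^^ k) p)" by simp
  also have "\<dots> = psiG (md n (int (fst p) - int k * int a), md n (int (snd p) - int k * int b))" using Suc by simp
  also have "\<dots> = (md n (int (fst p) - int (Suc k) * int a), md n (int (snd p) - int (Suc k) * int b))"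
  proof -
    have a1: "md n (int (md n (int (fst p) - int k * int a)) - int a) = md n (int (fst p) - int (Suc k) * int a)"
    proof -
      have e: "int (md n (int (fst p) - int k * int a)) - int a - (int (fst p) - int (Suc k) * int a) =
          int (md n (int (fst p) - int k * int a)) - (int (fst p) - int k * int a)" by (simp add: algebra_simps)
      show ?thesis unfolding md_eq_iff e by (rule md_cong)
    qed
    have a2: "md n (int (md n (int (snd p) - int k * int b)) - int b) = md n (int (snd p) - int (Suc k) * int b)"
    proof -
      have e: "int (md n (int (snd p) - int k * int b)) - int b - (int (snd p) - int (Suc k) * int b) =
          int (md n (int (snd p) - int k * int b)) - (int (snd p) - int k * int b)" by (simp add: algebra_simps)
      show ?thesis unfolding md_eq_iff e by (rule md_cong)
    qed
    show ?thesis unfolding psiG_def using a1 a2 by simp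
  qed
  finally show ?case .
qed

lemma GG_iter: "normal n A \<Longrightarrow> (GG ^^ k) A = pull n (psiG ^^ k) A"
proof (induction k)
  case 0
  have "pull n (psiG ^^ 0) A = A" by (rule pull_id[OF 0]) simp
  then show ?case by (simp add: id_def)
next
  case (Suc k)
  have "(GG ^^ Suc k) A = GG ((GG ^^ k) A)" by simp
  also have "\<dots> = GG (pull n (psiG ^^ k) A)" by (simp only: Suc.IH[OF Suc.prems])
  also have "\<dots> = pull n psiG (pull n (psiG ^^ k) A)" by (rule GG_pull[OF pull_normal])
  also have "\<dots> = pull n ((psiG ^^ k) \<circ> psiG) A" by (rule pull_pull) (rule psiG_zn2)
  also have "(psiG ^^ k) \<circ> psiG = psiG ^^ Suc k" by (simp only: funpow_Suc_right)
  finally show ?case .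
qed

lemma psiF2: "psiF (psiF p) = (md n (2 * int x1 - int (fst p)), md n (2 * int x2 - int (snd p)))"
proof -
  have a1: "md n (int x1 + int x2 - int (md n (int (fst p) - int x1 + int x2))) = md n (2 * int x1 - int (fst p))"
  proof -
    have e: "int x1 + int x2 - int (md n (int (fst p) - int x1 + int x2)) - (2 * int x1 - int (fst p)) =
      - (int (md n (int (fst p) - int x1 + int x2)) - (int (fst p) - int x1 + int x2))" by algebra
    show ?thesis unfolding md_eq_iff e using md_cong by (simp only: dvd_minus_iff)
  qed
  have a2: "md n (int (md n (int x1 + int x2 - int (snd p))) - int x1 + int x2) = md n (2 * int x2 - int (snd p))"
  proof -
    have e: "int (md n (int x1 + int x2 - int (snd p))) - int x1 + int x2 - (2 * int x2 - int (snd p)) =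
      int (md n (int x1 + int x2 - int (snd p))) - (int x1 + int x2 - int (snd p))" by algebra
    show ?thesis unfolding md_eq_iff e by (rule md_cong)
  qed
  show ?thesis unfolding psiF_def using a1 a2 by simp
qed

lemma psiF4: "p \<in> zn2 n \<Longrightarrow> (psiF ^^ 4) p = p"
proof -
  assume p: "p \<in> zn2 n"
  have "(psiF ^^ 4) p = psiF (psiF (psiF (psiF p)))" by (simp add: numeral_eq_Suc)
  also have "\<dots> = (md n (2 * int x1 - int (md n (2 * int x1 - int (fst p)))), md n (2 * int x2 - int (md n (2 * int x2 - int (snd p)))))"
    by (simp only: psiF2 fst_conv snd_conv)
  also have "\<dots> = p"
  proof -
    have "md n (2 * int x1 - int (md n (2 * int x1 - int (fst p)))) = fst p"
    proof -
      have e: "2 * int x1 - int (md n (2 * int x1 - int (fst p))) - int (fst p) = - (int (md n (2 * int x1 - int (fst p))) - (2 * int x1 - int (fst p)))" by algebra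
      have h: "N dvd (2 * int x1 - int (md n (2 * int x1 - int (fst p))) - int (fst p))"
        unfolding e using md_cong by (simp only: dvd_minus_iff)
      have lt: "fst p < n" using p zn2_iff by blast
      show ?thesis using md_eq_nat[OF lt] h by blast
    qed
    moreover have "md n (2 * int x2 - int (md n (2 * int x2 - int (snd p)))) = snd p"
    proof -
      have e: "2 * int x2 - int (md n (2 * int x2 - int (snd p))) - int (snd p) = - (int (md n (2 * int x2 - int (snd p))) - (2 * int x2 - int (snd p)))" by algebra
      have h: "N dvd (2 * int x2 - int (md n (2 * int x2 - int (snd p))) - int (snd p))"
        unfolding e using md_cong by (simp only: dvd_minus_iff)
      have lt: "snd p < n" using p zn2_iff by blast
      show ?thesis using md_eq_nat[OF lt] h by blast
    qed
    ultimately show ?thesis by (simp add: prod_eq_iff)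
  qed
  finally show ?thesis .
qed

lemma FF4: "S \<in> SS \<Longrightarrow> (FF ^^ 4) S = S"
proof -
  assume S: "S \<in> SS"
  have "(FF ^^ 4) S = pull n (psiF ^^ 4) S" by (rule FF_iter[OF SS_normal[OF S]])
  also have "\<dots> = S" by (rule pull_id[OF SS_normal[OF S]]) (rule psiF4)
  finally show ?thesis .
qed

lemma GGn: "S \<in> SS \<Longrightarrow> (GG ^^ n) S = S"
proof -
  assume S: "S \<in> SS"
  have "(psiG ^^ n) p = p" if p: "p \<in> zn2 n" for p
  proof -
    have "md n (int (fst p) - int n * int a) = fst p"
    proof -
      have "N dvd (int (fst p) - int n * int a - int (fst p))" by simp
      then show ?thesis using md_eq_nat p zn2_iff by blast
    qed
    moreover have "md n (int (snd p) - int n * int b) = snd p"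
    proof -
      have "N dvd (int (snd p) - int n * int b - int (snd p))" by simp
      then show ?thesis using md_eq_nat p zn2_iff by blast
    qed
    ultimately show ?thesis using psiG_pow[OF p] by (simp add: prod_eq_iff)
  qed
  then have "pull n (psiG ^^ n) S = S" by (rule pull_id[OF SS_normal[OF S]])
  then show ?thesis using GG_iter[OF SS_normal[OF S]] by simp
qed

end


lemma funpow_closed: "(\<And>y. y \<in> P \<Longrightarrow> f y \<in> P) \<Longrightarrow> y \<in> P \<Longrightarrow> (f ^^ j) y \<in> P"
  by (induction j) auto

lemma funpow_rel: "(\<And>y z. (y, z) \<in> R \<Longrightarrow> (f y, f z) \<in> R) \<Longrightarrow> (y, z) \<in> R \<Longrightarrow> ((f ^^ j) y, (f ^^ j) z) \<in> R"
  by (induction j) auto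

lemma funpow_Suc_app: "(f ^^ Suc k) x = f ((f ^^ k) x)" by simp

lemma funpow_gen: "(f ^^ j) \<in> generated f g"
proof (induction j)
  case 0
  have "id \<in> generated f g" by (rule generated.gen_id)
  then show ?case by (simp only: funpow.simps(1))
next
  case (Suc j)
  then have "f \<circ> (f ^^ j) \<in> generated f g" by (rule generated.gen_f)
  then show ?case by (simp only: funpow.simps(2))
qed

lemma pow_gen_gen: "(g ^^ i) \<circ> (f ^^ j) \<in> generated f g"
proof (induction i)
  case 0
  have "f ^^ j \<in> generated f g" by (rule funpow_gen)
  then show ?case by (simp only: funpow.simps(1) id_comp)
next
  case (Suc i)
  then have "g \<circ> ((g ^^ i) \<circ> (f ^^ j)) \<in> generated f g" by (rule generated.gen_g)
  then show ?case by (simp only: funpow.simps(2) comp_assoc)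
qed

context perf_setup begin

definition m0 where "m0 = (SOME m::nat. N dvd (int a + int m * int b) \<and> N dvd (int b - int m * int a))"

lemma m0_prop: "N dvd (int a + int m0 * int b)" "N dvd (int b - int m0 * int a)"
  using someI_ex[OF conj_m] unfolding m0_def by blast+

lemma conj_FG: "S \<in> SS \<Longrightarrow> FF (GG S) = (GG ^^ m0) (FF S)"
proof -
  assume S: "S \<in> SS"
  have nS: "normal n S" by (rule SS_normal[OF S])
  have l1: "FF (GG S) = pull n (psiG \<circ> psiF) S"
  proof -
    have "FF (GG S) = FF (pull n psiG S)" by (simp only: GG_pull[OF nS])
    also have "\<dots> = pull n psiF (pull n psiG S)" by (rule FF_pull)
    also have "\<dots> = pull n (psiG \<circ> psiF) S" by (rule pull_pull) (rule psiF_zn2)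
    finally show ?thesis .
  qed
  have l2: "(GG ^^ m0) (FF S) = pull n (psiF \<circ> (psiG ^^ m0)) S"
  proof -
    have "(GG ^^ m0) (FF S) = (GG ^^ m0) (pull n psiF S)" by (simp only: FF_pull)
    also have "\<dots> = pull n (psiG ^^ m0) (pull n psiF S)" by (rule GG_iter[OF pull_normal])
    also have "\<dots> = pull n (psiF \<circ> (psiG ^^ m0)) S"
      by (rule pull_pull) (simp add: psiG_pow zn2_iff md_lt)
    finally show ?thesis .
  qed
  have "pull n (psiG \<circ> psiF) S = pull n (psiF \<circ> (psiG ^^ m0)) S"
  proof (rule pull_cong)
    fix p assume p: "p \<in> zn2 n"
    define A where "A = int x1 + int x2 - int (snd p)"
    define B where "B = int (snd p) - int m0 * int b"
    define C where "C = int (fst p) - int x1 + int x2"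
    define D where "D = int (fst p) - int m0 * int a"
    have f1: "md n (int (md n A) - int a) = md n (int x1 + int x2 - int (md n B))"
    proof -
      have e: "int (md n A) - int a - (int x1 + int x2 - int (md n B)) =
          ((int (md n A) - A) + (int (md n B) - B)) - (int a + int m0 * int b)"
        unfolding A_def B_def by algebra
      show ?thesis unfolding md_eq_iff e by (rule dvd_diff[OF dvd_add[OF md_cong md_cong] m0_prop(1)])
    qed
    have f2: "md n (int (md n C) - int b) = md n (int (md n D) - int x1 + int x2)"
    proof -
      have e: "int (md n C) - int b - (int (md n D) - int x1 + int x2) =
          ((int (md n C) - C) - (int (md n D) - D)) - (int b - int m0 * int a)"
        unfolding C_def D_def by algebra
      show ?thesis unfolding md_eq_iff e by (rule dvd_diff[OF dvd_diff[OF md_cong md_cong] m0_prop(2)])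
    qed
    have "(psiG ^^ m0) p = (md n D, md n B)" unfolding B_def D_def by (rule psiG_pow[OF p])
    then show "(psiG \<circ> psiF) p = (psiF \<circ> (psiG ^^ m0)) p"
      using f1 f2 unfolding psiF_def psiG_def A_def C_def by simp
  qed
  then show ?thesis by (simp only: l1 l2)
qed

lemma FFj_SS: "S \<in> SS \<Longrightarrow> (FF ^^ j) S \<in> SS"
  by (rule funpow_closed[OF SS_F])

lemma GGi_SS: "S \<in> SS \<Longrightarrow> (GG ^^ i) S \<in> SS"
  by (rule funpow_closed[OF SS_G])

lemma gen_form: "\<phi> \<in> generated FF GG \<Longrightarrow> \<exists>i j. \<forall>S\<in>SS. \<phi> S = (GG ^^ i) ((FF ^^ j) S)"
proof (induction rule: generated.induct)
  case gen_id
  show ?case by (rule exI[of _ 0], rule exI[of _ 0]) simp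
next
  case (gen_f \<phi>)
  then obtain i j where ij: "\<forall>S\<in>SS. \<phi> S = (GG ^^ i) ((FF ^^ j) S)" by blast
  have "\<forall>S\<in>SS. (FF \<circ> \<phi>) S = (GG ^^ (m0 * i)) ((FF ^^ Suc j) S)"
  proof
    fix S assume S: "S \<in> SS"
    have e1: "\<phi> S = (GG ^^ i) ((FF ^^ j) S)" using ij S by blast
    have e2: "FF ((GG ^^ i) ((FF ^^ j) S)) = (GG ^^ (m0 * i)) (FF ((FF ^^ j) S))"
      by (rule fg_iter[of SS GG FF m0, OF SS_G conj_FG FFj_SS[OF S]])
    have e3: "FF ((FF ^^ j) S) = (FF ^^ Suc j) S" by (rule funpow_Suc_app[symmetric])
    show "(FF \<circ> \<phi>) S = (GG ^^ (m0 * i)) ((FF ^^ Suc j) S)"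
      by (simp only: comp_apply[of FF \<phi> S] e1 e2 e3)
  qed
  then show ?case by blast
next
  case (gen_g \<phi>)
  then obtain i j where ij: "\<forall>S\<in>SS. \<phi> S = (GG ^^ i) ((FF ^^ j) S)" by blast
  have "\<forall>S\<in>SS. (GG \<circ> \<phi>) S = (GG ^^ Suc i) ((FF ^^ j) S)"
  proof
    fix S assume S: "S \<in> SS"
    have e1: "\<phi> S = (GG ^^ i) ((FF ^^ j) S)" using ij S by blast
    show "(GG \<circ> \<phi>) S = (GG ^^ Suc i) ((FF ^^ j) S)"
      by (simp only: comp_apply[of GG \<phi> S] e1 funpow_Suc_app)
  qed
  then show ?case by blast
qed

lemma pow_gen: "(GG ^^ i) \<circ> (FF ^^ j) \<in> generated FF GG"
  by (rule pow_gen_gen)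

lemma RR_iter: "(S1, S2) \<in> RR \<Longrightarrow> ((GG ^^ i) ((FF ^^ j) S1), (GG ^^ i) ((FF ^^ j) S2)) \<in> RR"
  by (rule funpow_rel[OF RR_G funpow_rel[OF RR_F]])

lemma orbit_eq:
  assumes S0: "S0 \<in> SS"
  shows "class_orbit (generated FF GG) (SS // RR) (RR``{S0}) = {RR``{(GG ^^ i) ((FF ^^ j) S0)} | i j. True}"
proof
  show "class_orbit (generated FF GG) (SS // RR) (RR``{S0}) \<subseteq> {RR``{(GG ^^ i) ((FF ^^ j) S0)} | i j. True}"
  proof
    fix Y assume "Y \<in> class_orbit (generated FF GG) (SS // RR) (RR``{S0})"
    then obtain \<phi> S where Y: "Y \<in> SS // RR" and \<phi>: "\<phi> \<in> generated FF GG" and S: "S \<in> RR``{S0}"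
      and e: "\<phi> S \<in> Y" unfolding class_orbit_def by blast
    have SR: "(S0, S) \<in> RR" using S by simp
    have SS': "S \<in> SS" using SR unfolding relabel_rel_def by blast
    obtain i j where ij: "\<forall>S\<in>SS. \<phi> S = (GG ^^ i) ((FF ^^ j) S)" using gen_form[OF \<phi>] by blast
    have eqS: "\<phi> S = (GG ^^ i) ((FF ^^ j) S)" using ij SS' by blast
    have r: "((GG ^^ i) ((FF ^^ j) S0), \<phi> S) \<in> RR" unfolding eqS by (rule RR_iter[OF SR])
    obtain z where z: "z \<in> SS" "Y = RR``{z}" using Y by (rule quotientE)
    have zr: "(z, \<phi> S) \<in> RR" using e unfolding z(2) by blast
    have "Y = RR``{\<phi> S}" unfolding z(2) by (rule equiv_class_eq[OF RR_equiv zr])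
    also have "\<dots> = RR``{(GG ^^ i) ((FF ^^ j) S0)}" by (rule equiv_class_eq[OF RR_equiv r, symmetric])
    finally show "Y \<in> {RR``{(GG ^^ i) ((FF ^^ j) S0)} | i j. True}" by blast
  qed
  show "{RR``{(GG ^^ i) ((FF ^^ j) S0)} | i j. True} \<subseteq> class_orbit (generated FF GG) (SS // RR) (RR``{S0})"
  proof
    fix Y assume "Y \<in> {RR``{(GG ^^ i) ((FF ^^ j) S0)} | i j. True}"
    then obtain i j where Y: "Y = RR``{(GG ^^ i) ((FF ^^ j) S0)}" by blast
    have el: "(GG ^^ i) ((FF ^^ j) S0) \<in> SS" using GGi_SS FFj_SS S0 by blast
    have "Y \<in> SS // RR" unfolding Y using el by (rule quotientI)
    moreover have "((GG ^^ i) \<circ> (FF ^^ j)) \<in> generated FF GG" by (rule pow_gen)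
    moreover have "S0 \<in> RR``{S0}" by (rule equiv_class_self[OF RR_equiv S0])
    moreover have "((GG ^^ i) \<circ> (FF ^^ j)) S0 \<in> Y"
      unfolding Y comp_apply[of "GG ^^ i" "FF ^^ j" S0] by (rule equiv_class_self[OF RR_equiv el])
    ultimately show "Y \<in> class_orbit (generated FF GG) (SS // RR) (RR``{S0})"
      unfolding class_orbit_def by blast
  qed
qed

theorem main_loc:
  "\<forall>X \<in> SS // RR. card (class_orbit (G_S n a b x1 x2) (SS // RR) X) dvd 4 * n"
proof
  fix X assume "X \<in> SS // RR"
  then obtain S0 where S0: "S0 \<in> SS" and X: "X = RR``{S0}" by (rule quotientE)
  have Geq: "G_S n a b x1 x2 = generated FF GG" unfolding G_S_def FF_def GG_def by (rule refl)
  have EQ: "class_orbit (G_S n a b x1 x2) (SS // RR) X = {RR``{(GG ^^ i) ((FF ^^ j) S0)} | i j. True}"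
    unfolding X by (simp only: Geq orbit_eq[OF S0])
  have DV: "card {RR``{(GG ^^ i) ((FF ^^ j) S0)} | i j. True} dvd 4 * n"
  proof -
    have n0: "n > 0" using n5 by simp
    show ?thesis by (rule orbit_abstract[OF RR_equiv SS_F SS_G RR_F RR_G FF4 GGn conj_FG n0 S0])
  qed
  show "card (class_orbit (G_S n a b x1 x2) (SS // RR) X) dvd 4 * n" unfolding EQ by (rule DV)
qed

end

theorem mainTheorem3:
  fixes t n a b x1 x2 :: nat
  assumes "t \<ge> 1"
    and "n = 2 * t^2 + 2 * t + 1"
    and "a < n" and "b < n" and "(a, b) \<noteq> (0, 0)"
    and "is_perfect n (lin_code n a b)"
    and "t_error_correcting n t (lin_code n a b)"
    and "x1 < n" and "x2 < n"
  shows "\<forall>X \<in> perfect_sudoku_grids n t (translate_code n (x1, x2) (lin_code n a b))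
               // relabel_rel n (perfect_sudoku_grids n t (translate_code n (x1, x2) (lin_code n a b))).
           card (class_orbit (G_S n a b x1 x2)
                   (perfect_sudoku_grids n t (translate_code n (x1, x2) (lin_code n a b))
                      // relabel_rel n (perfect_sudoku_grids n t (translate_code n (x1, x2) (lin_code n a b))))
                   X) dvd 4 * n"
proof -
  interpret perf_setup t n a b x1 x2 by (rule perf_setup.intro) (fact assms)+
  show ?thesis by (rule main_loc)
qed


end
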